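(* Let $\vec v\in\mathcal{S}^{n-1}$ and let $U\subseteq\mathbb{R}^{n}$ be open with $U-t\vec v\subseteq U$ for all $t\ge0$. If $w_{1},w_{2}\in\mathcal{E}'(\mathbb{R}^{n})$ are equal on $U$, then $\mathcal{I}_{\vec v}w_{1}$ and $\mathcal{I}_{\vec v}w_{2}$ are equal on $U$.
   Context: For $\phi\in\mathscr{S}(\mathbb{R}^n)$, $\mathcal{X}_{\vec v}\phi(\vec u)=\int_{\mathbb{R}}\phi(\vec u+s\vec v)\,ds$ for $\vec u\in\vec v^\perp$. For a distribution $w$ with $t_{\min}=\inf_{\vec x\in\mathrm{supp}\,w}\vec x\cdot\vec v>-\infty$ (e.g. $w\in\mathcal{E}'$), choose $\psi_0\in\mathcal{C}_0^\infty(\mathbb{R})$ with $\int\psi_0=1$ and $\mathrm{supp}\,\psi_0\subseteq(-\infty,t_{\min})$, set $\mathcal{I}_{\vec v}\phi(\vec u+t\vec v)=\int_{-\infty}^{t}\big(\phi(\vec u+s\vec v)-\mathcal{X}_{\vec v}\phi(\vec u)\psi_0(s)\big)\,ds$ ($\vec u\in\vec v^\perp$, $t\in\mathbb{R}$), and define the distributional directional antiderivative by $\langle\mathcal{I}_{\vec v}w,\phi\rangle=-\langle w,\mathcal{I}_{\vec v}\phi\rangle$; it is independent of the choice of $\psi_0$. Two distributions are equal on an open set $U$ if they agree on all test functions supported in $U$. *)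

theory Defs
  imports "HOL-Analysis.Analysis"
begin

text \<open>Iterated partial derivatives of a real function on \<open>\<real>^n\<close>; the list gives the
 coordinate directions, innermost derivative last in the list.\<close>
fun pderivs :: "'n::finite list \<Rightarrow> (real^'n \<Rightarrow> real) \<Rightarrow> real^'n \<Rightarrow> real" where
  "pderivs [] f = f"
| "pderivs (i # is) f = (\<lambda>x. deriv (\<lambda>t. pderivs is f (x + t *\<^sub>R axis i 1)) 0)"

definition smooth :: "(real^'n::finite \<Rightarrow> real) \<Rightarrow> bool" where
  "smooth f \<longleftrightarrow> (\<forall>is. continuous_on UNIV (pderivs is f) \<and>
      (\<forall>i x. (\<lambda>t. pderivs is f (x + t *\<^sub>R axis i 1)) differentiable (at 0)))"

definition smooth1 :: "(real \<Rightarrow> real) \<Rightarrow> bool" where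
  "smooth1 f \<longleftrightarrow> (\<forall>k x. ((deriv ^^ k) f) differentiable (at x))"

definition test_fun_on :: "(real^'n::finite) set \<Rightarrow> (real^'n \<Rightarrow> real) \<Rightarrow> bool" where
  "test_fun_on U \<phi> \<longleftrightarrow> smooth \<phi> \<and> compact (closure {x. \<phi> x \<noteq> 0})
      \<and> closure {x. \<phi> x \<noteq> 0} \<subseteq> U"

text \<open>Compactly supported distributions \<open>\<E>'(\<real>^n)\<close>: (real-)linear functionals on
 \<open>C^\<infinity>(\<real>^n)\<close> (complex valued; real-linear functionals on real-valued functions
 correspond exactly to complex-linear functionals on complex-valued ones), continuous for
 the Frechet topology of \<open>C^\<infinity>\<close>, i.e. bounded by a seminorm
 \<open>C \<cdot> max_{|\<alpha>|\<le>N} sup_K |\<partial>^\<alpha>\<phi>|\<close> with \<open>K\<close> compact.\<close>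
definition compact_distr :: "((real^'n::finite \<Rightarrow> real) \<Rightarrow> complex) \<Rightarrow> bool" where
  "compact_distr w \<longleftrightarrow>
     (\<forall>\<phi> \<psi>. smooth \<phi> \<longrightarrow> smooth \<psi> \<longrightarrow> w (\<lambda>x. \<phi> x + \<psi> x) = w \<phi> + w \<psi>) \<and>
     (\<forall>c \<phi>. smooth \<phi> \<longrightarrow> w (\<lambda>x. c * \<phi> x) = c *\<^sub>R w \<phi>) \<and>
     (\<exists>K C N. compact K \<and> (\<forall>\<phi> M. smooth \<phi> \<longrightarrow>
         (\<forall>is x. length is \<le> N \<longrightarrow> x \<in> K \<longrightarrow> \<bar>pderivs is \<phi> x\<bar> \<le> M) \<longrightarrow>
         norm (w \<phi>) \<le> C * M))"

definition distr_eq_on ::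
  "(real^'n::finite) set \<Rightarrow> ((real^'n \<Rightarrow> real) \<Rightarrow> complex) \<Rightarrow> ((real^'n \<Rightarrow> real) \<Rightarrow> complex) \<Rightarrow> bool" where
  "distr_eq_on U w1 w2 \<longleftrightarrow> (\<forall>\<phi>. test_fun_on U \<phi> \<longrightarrow> w1 \<phi> = w2 \<phi>)"

definition dsupp :: "((real^'n::finite \<Rightarrow> real) \<Rightarrow> complex) \<Rightarrow> (real^'n) set" where
  "dsupp w = UNIV - \<Union>{V. open V \<and> distr_eq_on V w (\<lambda>_. 0)}"

definition tmin :: "real^'n::finite \<Rightarrow> ((real^'n \<Rightarrow> real) \<Rightarrow> complex) \<Rightarrow> ereal" where
  "tmin v w = Inf ((\<lambda>x. ereal (x \<bullet> v)) ` dsupp w)"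

definition admissible_psi0 :: "real^'n::finite \<Rightarrow> ((real^'n \<Rightarrow> real) \<Rightarrow> complex) \<Rightarrow> (real \<Rightarrow> real) \<Rightarrow> bool" where
  "admissible_psi0 v w \<psi>0 \<longleftrightarrow> smooth1 \<psi>0 \<and> compact (closure {s. \<psi>0 s \<noteq> 0}) \<and>
     (\<psi>0 has_integral 1) UNIV \<and> (\<forall>s \<in> closure {s. \<psi>0 s \<noteq> 0}. ereal s < tmin v w)"

definition xray :: "real^'n::finite \<Rightarrow> (real^'n \<Rightarrow> real) \<Rightarrow> real^'n \<Rightarrow> real" where
  "xray v \<phi> u = integral UNIV (\<lambda>s. \<phi> (u + s *\<^sub>R v))"

text \<open>Directional antiderivative of a function, for unit \<open>v\<close>: writing \<open>x = u + t v\<close> with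
 \<open>u \<in> v\<^sup>\<perp>\<close>, i.e. \<open>t = x\<bullet>v\<close>, \<open>u = x - (x\<bullet>v) v\<close>.\<close>
definition fun_antideriv :: "real^'n::finite \<Rightarrow> (real \<Rightarrow> real) \<Rightarrow> (real^'n \<Rightarrow> real) \<Rightarrow> real^'n \<Rightarrow> real" where
  "fun_antideriv v \<psi>0 \<phi> x =
     (let t = x \<bullet> v; u = x - t *\<^sub>R v in
      integral {..t} (\<lambda>s. \<phi> (u + s *\<^sub>R v) - xray v \<phi> u * \<psi>0 s))"

definition distr_antideriv :: "real^'n::finite \<Rightarrow> ((real^'n \<Rightarrow> real) \<Rightarrow> complex) \<Rightarrow> (real^'n \<Rightarrow> real) \<Rightarrow> complex" where
  "distr_antideriv v w \<phi> = - w (fun_antideriv v (SOME \<psi>0. admissible_psi0 v w \<psi>0) \<phi>)"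

end

theory Submission
  imports Defs
begin


definition pdiff :: "(real^'n::finite \<Rightarrow> real) \<Rightarrow> bool" where
  "pdiff f \<longleftrightarrow> continuous_on UNIV f \<and> (\<forall>i x. (\<lambda>t. f (x + t *\<^sub>R axis i 1)) differentiable (at 0))"

lemma pderivs_Cons': "pderivs (i # xs) f = pderivs [i] (pderivs xs f)"
  by simp

lemma pderivs_single: "pderivs [i] f x = deriv (\<lambda>t. f (x + t *\<^sub>R axis i 1)) 0"
  by simp

declare pderivs.simps(2)[simp del]

lemma pderivs_append: "pderivs (xs @ ys) f = pderivs xs (pderivs ys f)"
proof (induction xs)
  case Nil then show ?case by simp
next
  case (Cons a xs) then show ?case by (metis append_Cons pderivs_Cons')
qed

fun Pn :: "nat \<Rightarrow> (real^'n::finite \<Rightarrow> real) \<Rightarrow> bool" where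
  "Pn 0 f = True"
| "Pn (Suc n) f = (pdiff f \<and> (\<forall>i. Pn n (pderivs [i] f)))"

lemma Pn_iff: "Pn n f \<longleftrightarrow> (\<forall>xs. length xs < n \<longrightarrow> pdiff (pderivs xs f))"
proof (induction n arbitrary: f)
  case 0 show ?case by simp
next
  case (Suc n)
  show ?case
  proof
    assume H: "Pn (Suc n) f"
    show "\<forall>xs. length xs < Suc n \<longrightarrow> pdiff (pderivs xs f)"
    proof (intro allI impI)
      fix xs :: "'a list" assume len: "length xs < Suc n"
      show "pdiff (pderivs xs f)"
      proof (cases xs rule: rev_cases)
        case Nil thus ?thesis using H by simp
      next
        case (snoc js i)
        then have "pderivs xs f = pderivs js (pderivs [i] f)" by (simp add: pderivs_append)
        moreover have "Pn n (pderivs [i] f)" using H by simp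
        ultimately show ?thesis using Suc.IH snoc len by auto
      qed
    qed
  next
    assume H: "\<forall>xs. length xs < Suc n \<longrightarrow> pdiff (pderivs xs f)"
    have "pdiff f" using H[rule_format, of "[]"] by simp
    moreover have "Pn n (pderivs [i] f)" for i
      unfolding Suc.IH using H[rule_format, of "_ @ [i]"] by (auto simp: pderivs_append)
    ultimately show "Pn (Suc n) f" by simp
  qed
qed

lemma smooth_Pn: "smooth f \<longleftrightarrow> (\<forall>n. Pn n f)"
proof -
  have "smooth f \<longleftrightarrow> (\<forall>xs. pdiff (pderivs xs f))"
    unfolding smooth_def pdiff_def by auto
  also have "\<dots> \<longleftrightarrow> (\<forall>n. Pn n f)"
    unfolding Pn_iff by (metis lessI)
  finally show ?thesis .
qed

lemma Pn_mono: "Pn (Suc n) f \<Longrightarrow> Pn n f"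
  by (induction n arbitrary: f) auto

lemma Pn_mono': "Pn n f \<Longrightarrow> m \<le> n \<Longrightarrow> Pn m f"
  unfolding Pn_iff by auto

lemma pdiff_D: "pdiff f \<Longrightarrow> ((\<lambda>t. f (x + t *\<^sub>R axis i 1)) has_real_derivative pderivs [i] f x) (at 0)"
  unfolding pdiff_def by (simp add: DERIV_deriv_iff_real_differentiable pderivs_single)

lemma smooth_pdiff: "smooth f \<Longrightarrow> pdiff f"
  unfolding smooth_Pn by (metis Pn.simps(2))

lemma smooth_D: "smooth f \<Longrightarrow> smooth (pderivs [i] f)"
  unfolding smooth_Pn by (metis Pn.simps(2))

lemma smooth_cont: "smooth f \<Longrightarrow> continuous_on UNIV f"
  using smooth_pdiff pdiff_def by blast

lemma line_deriv_shift:
  fixes x y e :: "'a::real_normed_vector"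
  assumes "((\<lambda>s. f (y + s *\<^sub>R e)) has_real_derivative d) (at 0)" "y = x + t0 *\<^sub>R e"
  shows "((\<lambda>t. f (x + t *\<^sub>R e)) has_real_derivative d) (at t0)"
proof -
  have "((\<lambda>t. (\<lambda>s. f (y + s *\<^sub>R e)) (t + (-t0))) has_real_derivative d) (at t0)"
    using DERIV_shift[of "\<lambda>s. f (y + s *\<^sub>R e)" d t0 "-t0"] assms(1) by simp
  moreover have "(\<lambda>t. (\<lambda>s. f (y + s *\<^sub>R e)) (t + (-t0))) = (\<lambda>t. f (x + t *\<^sub>R e))"
  proof
    fix t
    have "x + t0 *\<^sub>R e + (t - t0) *\<^sub>R e = x + t *\<^sub>R e" by (simp add: algebra_simps)
    then show "(\<lambda>s. f (y + s *\<^sub>R e)) (t + (-t0)) = f (x + t *\<^sub>R e)" using assms(2) by (simp add: add.assoc)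
  qed
  ultimately show ?thesis by simp
qed

lemma pdiff_D_at: "pdiff f \<Longrightarrow> ((\<lambda>t. f (x + t *\<^sub>R axis i 1)) has_real_derivative pderivs [i] f (x + t0 *\<^sub>R axis i 1)) (at t0)"
  by (rule line_deriv_shift[OF pdiff_D]) auto

lemma pdiffI:
  fixes f :: "real^'n::finite \<Rightarrow> real" and g :: "'n \<Rightarrow> real^'n \<Rightarrow> real"
  assumes "continuous_on UNIV f"
    and "\<And>j y. ((\<lambda>t. f (y + t *\<^sub>R axis j 1)) has_real_derivative g j y) (at 0)"
  shows "pdiff f" "pderivs [i] f = g i"
proof -
  show "pdiff f" unfolding pdiff_def using assms real_differentiable_def by blast
  show "pderivs [i] f = g i"
    by (rule ext) (simp add: DERIV_imp_deriv[OF assms(2)] pderivs_single)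
qed

lemma pderivs_const: "pderivs [i] (\<lambda>x::real^'n::finite. c) = (\<lambda>x. 0)"
  by (rule ext) (simp add: pderivs_single DERIV_imp_deriv)

lemma pdiff_const: "pdiff (\<lambda>x::real^'n::finite. c)"
  unfolding pdiff_def by simp

lemma Pn_const: "Pn n (\<lambda>x::real^'n::finite. c)"
proof (induction n arbitrary: c)
  case 0 then show ?case by simp
next
  case (Suc n)
  then show ?case by (simp add: pderivs_const pdiff_const)
qed

lemma Pn_add: "Pn n f \<Longrightarrow> Pn n g \<Longrightarrow> Pn n (\<lambda>x. f x + g x)"
proof (induction n arbitrary: f g)
  case 0 then show ?case by simp
next
  case (Suc n)
  have pf: "pdiff f" and pg: "pdiff g" using Suc.prems by auto
  have c: "continuous_on UNIV (\<lambda>x. f x + g x)"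
    using pf pg unfolding pdiff_def by (auto intro: continuous_on_add)
  have *: "((\<lambda>t. (\<lambda>x. f x + g x) (x + t *\<^sub>R axis i 1)) has_real_derivative
      (\<lambda>i x. pderivs [i] f x + pderivs [i] g x) i x) (at 0)" for i x
    using DERIV_add[OF pdiff_D[OF pf] pdiff_D[OF pg]] by simp
  have "Pn n (\<lambda>x. pderivs [i] f x + pderivs [i] g x)" for i
    using Suc by auto
  then show ?case using pdiffI[OF c *] by simp
qed

lemma Pn_cmult: "Pn n f \<Longrightarrow> Pn n (\<lambda>x. c * f x)"
proof (induction n arbitrary: f)
  case 0 then show ?case by simp
next
  case (Suc n)
  have pf: "pdiff f" using Suc.prems by auto
  have c: "continuous_on UNIV (\<lambda>x. c * f x)"
    using pf unfolding pdiff_def by (auto intro: continuous_on_mult_left)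
  have *: "((\<lambda>t. (\<lambda>x. c * f x) (x + t *\<^sub>R axis i 1)) has_real_derivative
      (\<lambda>i x. c * pderivs [i] f x) i x) (at 0)" for i x
    using DERIV_cmult[OF pdiff_D[OF pf]] by simp
  have "Pn n (\<lambda>x. c * pderivs [i] f x)" for i
    using Suc by auto
  then show ?case using pdiffI[OF c *] by simp
qed

lemma Pn_mult: "Pn n f \<Longrightarrow> Pn n g \<Longrightarrow> Pn n (\<lambda>x. f x * g x)"
proof (induction n arbitrary: f g)
  case 0 then show ?case by simp
next
  case (Suc n)
  have pf: "pdiff f" and pg: "pdiff g" using Suc.prems by auto
  have c: "continuous_on UNIV (\<lambda>x. f x * g x)"
    using pf pg unfolding pdiff_def by (auto intro: continuous_on_mult)
  have *: "((\<lambda>t. (\<lambda>x. f x * g x) (x + t *\<^sub>R axis i 1)) has_real_derivative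
      (\<lambda>i x. pderivs [i] f x * g x + f x * pderivs [i] g x) i x) (at 0)" for i x
    using DERIV_mult[OF pdiff_D[OF pf] pdiff_D[OF pg]] by (simp add: mult.commute)
  have "Pn n (\<lambda>x. pderivs [i] f x * g x + f x * pderivs [i] g x)" for i
  proof -
    have "Pn n (pderivs [i] f)" "Pn n (pderivs [i] g)" using Suc.prems by auto
    moreover have "Pn n f" "Pn n g" using Suc.prems Pn_mono by blast+
    ultimately have "Pn n (\<lambda>x. pderivs [i] f x * g x)" "Pn n (\<lambda>x. f x * pderivs [i] g x)"
      using Suc.IH by blast+
    then show ?thesis using Pn_add by blast
  qed
  then show ?case using pdiffI[OF c *] by simp
qed

lemma Pn_sum: "finite S \<Longrightarrow> (\<And>j. j \<in> S \<Longrightarrow> Pn n (f j)) \<Longrightarrow> Pn n (\<lambda>x. \<Sum>j\<in>S. f j x)"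
  by (induction S rule: finite_induct) (auto intro: Pn_add Pn_const)

lemma Pn_prod: "finite S \<Longrightarrow> (\<And>j. j \<in> S \<Longrightarrow> Pn n (f j)) \<Longrightarrow> Pn n (\<lambda>x. \<Prod>j\<in>S. f j x)"
  by (induction S rule: finite_induct) (auto intro: Pn_mult Pn_const)

lemma smooth_const: "smooth (\<lambda>x. c)" unfolding smooth_Pn by (simp add: Pn_const)
lemma smooth_add: "smooth f \<Longrightarrow> smooth g \<Longrightarrow> smooth (\<lambda>x. f x + g x)"
  unfolding smooth_Pn by (simp add: Pn_add)
lemma smooth_cmult: "smooth f \<Longrightarrow> smooth (\<lambda>x. c * f x)"
  unfolding smooth_Pn by (simp add: Pn_cmult)
lemma smooth_mult: "smooth f \<Longrightarrow> smooth g \<Longrightarrow> smooth (\<lambda>x. f x * g x)"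
  unfolding smooth_Pn by (simp add: Pn_mult)
lemma smooth_diff: "smooth f \<Longrightarrow> smooth g \<Longrightarrow> smooth (\<lambda>x. f x - g x)"
  using smooth_add[of f "\<lambda>x. (-1) * g x"] smooth_cmult[of g "-1"] by simp
lemma smooth_sum: "finite S \<Longrightarrow> (\<And>j. j \<in> S \<Longrightarrow> smooth (f j)) \<Longrightarrow> smooth (\<lambda>x. \<Sum>j\<in>S. f j x)"
  unfolding smooth_Pn by (simp add: Pn_sum)
lemma smooth_prod: "finite S \<Longrightarrow> (\<And>j. j \<in> S \<Longrightarrow> smooth (f j)) \<Longrightarrow> smooth (\<lambda>x. \<Prod>j\<in>S. f j x)"
  unfolding smooth_Pn by (simp add: Pn_prod)

lemma smooth_coord: "smooth (\<lambda>x::real^'n::finite. x $ j)"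
  unfolding smooth_Pn
proof
  fix n show "Pn n (\<lambda>x::real^'n. x $ j)"
  proof (cases n)
    case 0 then show ?thesis by simp
  next
    case (Suc m)
    have c: "continuous_on UNIV (\<lambda>x::real^'n. x $ j)"
      by (intro continuous_intros)
    have *: "((\<lambda>t. (\<lambda>x::real^'n. x $ j) (x + t *\<^sub>R axis i 1)) has_real_derivative
      (\<lambda>i x. if j = i then 1 else 0) i x) (at 0)" for i x
      by (auto simp: axis_def intro!: derivative_eq_intros)
    show ?thesis using pdiffI[OF c *] Suc by (auto intro: Pn_const)
  qed
qed

lemma smooth_inner: "smooth (\<lambda>x::real^'n::finite. x \<bullet> v)"
  unfolding inner_vec_def inner_real_def
proof (rule smooth_sum)
  show "finite (UNIV::'n set)" by simp
next
  fix i assume "i \<in> (UNIV::'n set)" show "smooth (\<lambda>x::real^'n. x $ i * v $ i)"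
    using smooth_mult[OF smooth_coord[of i] smooth_const[of "v $ i"]] by simp
qed


fun Qn :: "nat \<Rightarrow> (real \<Rightarrow> real) \<Rightarrow> bool" where
  "Qn 0 g = True"
| "Qn (Suc n) g = ((\<forall>x. g differentiable at x) \<and> Qn n (deriv g))"

lemma Qn_iff: "Qn n g \<longleftrightarrow> (\<forall>k<n. \<forall>x. (deriv ^^ k) g differentiable at x)"
proof (induction n arbitrary: g)
  case 0 then show ?case by simp
next
  case (Suc n)
  have "(\<forall>k<Suc n. \<forall>x. (deriv ^^ k) g differentiable at x) \<longleftrightarrow>
        (\<forall>x. g differentiable at x) \<and> (\<forall>k<n. \<forall>x. (deriv ^^ k) (deriv g) differentiable at x)"
    unfolding All_less_Suc2 by (simp add: funpow_Suc_right del: funpow.simps)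
  then show ?case using Suc.IH by simp
qed

lemma smooth1_Qn: "smooth1 g \<longleftrightarrow> (\<forall>n. Qn n g)"
  unfolding smooth1_def Qn_iff by (metis lessI)

lemma Qn_mono: "Qn (Suc n) f \<Longrightarrow> Qn n f"
  by (induction n arbitrary: f) auto

lemma smooth1_deriv: "smooth1 g \<Longrightarrow> smooth1 (deriv g)"
  unfolding smooth1_Qn by (metis Qn.simps(2))

lemma smooth1_diff: "smooth1 g \<Longrightarrow> g differentiable at x"
  unfolding smooth1_Qn by (metis Qn.simps(2))

lemma smooth1_D: "smooth1 g \<Longrightarrow> (g has_real_derivative deriv g x) (at x)"
  using smooth1_diff DERIV_deriv_iff_real_differentiable by blast

lemma smooth1_isCont: "smooth1 g \<Longrightarrow> isCont g x"
  using smooth1_D DERIV_isCont by blast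

lemma smooth1_cont: "smooth1 g \<Longrightarrow> continuous_on S g"
  using smooth1_isCont continuous_at_imp_continuous_on by blast

lemma deriv_eqI: "(\<And>x. (f has_real_derivative g x) (at x)) \<Longrightarrow> deriv f = g"
  by (rule ext) (simp add: DERIV_imp_deriv)

lemma Qn_const: "Qn n (\<lambda>x. c)"
proof (induction n arbitrary: c)
  case 0 then show ?case by simp
next
  case (Suc n)
  have "deriv (\<lambda>x::real. c) = (\<lambda>x. 0)" by (rule deriv_eqI) simp
  then show ?case using Suc by simp
qed

lemma Qn_add: "Qn n f \<Longrightarrow> Qn n g \<Longrightarrow> Qn n (\<lambda>x. f x + g x)"
proof (induction n arbitrary: f g)
  case 0 then show ?case by simp
next
  case (Suc n)
  have df: "\<And>x. (f has_real_derivative deriv f x) (at x)" and dg: "\<And>x. (g has_real_derivative deriv g x) (at x)"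
    using Suc.prems DERIV_deriv_iff_real_differentiable by auto
  have "deriv (\<lambda>x. f x + g x) = (\<lambda>x. deriv f x + deriv g x)"
    by (rule deriv_eqI) (intro DERIV_add df dg)
  moreover have "\<forall>x. (\<lambda>x. f x + g x) differentiable at x"
    using df dg DERIV_add real_differentiable_def by blast
  ultimately show ?case using Suc by simp
qed

lemma Qn_cmult: "Qn n f \<Longrightarrow> Qn n (\<lambda>x. c * f x)"
proof (induction n arbitrary: f)
  case 0 then show ?case by simp
next
  case (Suc n)
  have df: "\<And>x. (f has_real_derivative deriv f x) (at x)"
    using Suc.prems DERIV_deriv_iff_real_differentiable by auto
  have "deriv (\<lambda>x. c * f x) = (\<lambda>x. c * deriv f x)"
    by (rule deriv_eqI) (intro DERIV_cmult df)
  moreover have "\<forall>x. (\<lambda>x. c * f x) differentiable at x"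
    using df DERIV_cmult real_differentiable_def by blast
  ultimately show ?case using Suc by simp
qed

lemma Qn_mult: "Qn n f \<Longrightarrow> Qn n g \<Longrightarrow> Qn n (\<lambda>x. f x * g x)"
proof (induction n arbitrary: f g)
  case 0 then show ?case by simp
next
  case (Suc n)
  have df: "\<And>x. (f has_real_derivative deriv f x) (at x)" and dg: "\<And>x. (g has_real_derivative deriv g x) (at x)"
    using Suc.prems DERIV_deriv_iff_real_differentiable by auto
  have "deriv (\<lambda>x. f x * g x) = (\<lambda>x. deriv f x * g x + f x * deriv g x)"
    by (rule deriv_eqI) (use DERIV_mult[OF df dg] in \<open>simp add: ac_simps\<close>)
  moreover have "\<forall>x. (\<lambda>x. f x * g x) differentiable at x"
    using df dg DERIV_mult' real_differentiable_def by blast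
  moreover have "Qn n (\<lambda>x. deriv f x * g x + f x * deriv g x)"
  proof -
    have "Qn n (deriv f)" "Qn n (deriv g)" "Qn n f" "Qn n g" using Suc.prems Qn_mono by auto
    then have "Qn n (\<lambda>x. deriv f x * g x)" "Qn n (\<lambda>x. f x * deriv g x)" using Suc.IH by blast+
    then show ?thesis using Qn_add by blast
  qed
  ultimately show ?case by simp
qed

lemma Qn_affine: "smooth1 g \<Longrightarrow> Qn n (\<lambda>s. c * g (a * s + b))"
proof (induction n arbitrary: g c)
  case 0 then show ?case by simp
next
  case (Suc n)
  have d: "((\<lambda>s. c * g (a * s + b)) has_real_derivative (c * a) * deriv g (a * x + b)) (at x)" for x
  proof -
    have "((\<lambda>s. g (a * s + b)) has_real_derivative deriv g (a * x + b) * a) (at x)"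
      by (rule DERIV_chain2[OF smooth1_D[OF Suc.prems]]) (auto intro!: derivative_eq_intros)
    from DERIV_cmult[OF this, of c] show ?thesis by (simp add: algebra_simps)
  qed
  have "deriv (\<lambda>s. c * g (a * s + b)) = (\<lambda>x. (c * a) * deriv g (a * x + b))"
    by (rule deriv_eqI) (rule d)
  moreover have "\<forall>x. (\<lambda>s. c * g (a * s + b)) differentiable at x"
    using d real_differentiable_def by blast
  moreover have "Qn n (\<lambda>x. (c * a) * deriv g (a * x + b))"
    using Suc.IH smooth1_deriv[OF Suc.prems] by blast
  ultimately show ?case by simp
qed

lemma smooth1_affine: "smooth1 g \<Longrightarrow> smooth1 (\<lambda>s. c * g (a * s + b))"
  unfolding smooth1_Qn[of "\<lambda>s. c * g (a * s + b)"] using Qn_affine by blast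

lemma smooth1_mult: "smooth1 f \<Longrightarrow> smooth1 g \<Longrightarrow> smooth1 (\<lambda>x. f x * g x)"
  unfolding smooth1_Qn using Qn_mult by blast

lemma smooth1_add: "smooth1 f \<Longrightarrow> smooth1 g \<Longrightarrow> smooth1 (\<lambda>x. f x + g x)"
  unfolding smooth1_Qn using Qn_add by blast

lemma smooth1_const: "smooth1 (\<lambda>x. c)"
  unfolding smooth1_Qn using Qn_const by blast

definition Ef :: "real poly \<Rightarrow> real \<Rightarrow> real" where
  "Ef P s = (if s > 0 then poly P (inverse s) * exp (- inverse s) else 0)"

definition Pnext :: "real poly \<Rightarrow> real poly" where
  "Pnext P = [:0, 0, 1:] * (P - pderiv P)"

lemma poly_exp_lim: "((\<lambda>x. poly (R::real poly) x * exp (- x)) \<longlongrightarrow> 0) at_top"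
proof -
  have "((\<lambda>x. \<Sum>i\<le>degree R. coeff R i * (x ^ i / exp x)) \<longlongrightarrow> (\<Sum>i\<le>degree R. coeff R i * 0)) at_top"
    by (intro tendsto_sum tendsto_mult tendsto_const tendsto_power_div_exp_0)
  moreover have "(\<lambda>x. \<Sum>i\<le>degree R. coeff R i * (x ^ i / exp x)) = (\<lambda>x. poly R x * exp (- x))"
    by (auto simp: poly_altdef sum_divide_distrib exp_minus divide_inverse[symmetric])
  ultimately show ?thesis by simp
qed

lemma Ef_deriv: "(Ef P has_real_derivative Ef (Pnext P) s) (at s)"
proof (cases "s > 0")
  case True
  have d1: "((\<lambda>s. poly P (inverse s)) has_real_derivative poly (pderiv P) (inverse s) * (- (inverse s ^ Suc (Suc 0)))) (at s)"
    by (rule DERIV_chain2[OF poly_DERIV DERIV_inverse]) (use True in simp)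
  have d2: "((\<lambda>s. exp (- inverse s)) has_real_derivative exp (- inverse s) * (- (- (inverse s ^ Suc (Suc 0))))) (at s)"
    by (rule DERIV_chain2[OF DERIV_exp DERIV_minus[OF DERIV_inverse]]) (use True in simp)
  have d: "((\<lambda>s. poly P (inverse s) * exp (- inverse s)) has_real_derivative Ef (Pnext P) s) (at s)"
  proof -
    have eq: "poly (pderiv P) (inverse s) * (- (inverse s ^ Suc (Suc 0))) * exp (- inverse s) +
       exp (- inverse s) * (- (- (inverse s ^ Suc (Suc 0)))) * poly P (inverse s) = Ef (Pnext P) s"
      using True by (simp add: Ef_def Pnext_def algebra_simps power2_eq_square)
    show ?thesis using DERIV_mult[OF d1 d2] unfolding eq .
  qed
  show ?thesis
    by (rule has_field_derivative_transform_within_open[OF d, of "{0<..}"]) (use True in \<open>auto simp: Ef_def\<close>)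
next
  case False
  show ?thesis
  proof (cases "s < 0")
    case True
    have "((\<lambda>s. 0) has_real_derivative 0) (at s)" by simp
    then have "(Ef P has_real_derivative 0) (at s)"
      by (rule has_field_derivative_transform_within_open[of _ _ _ "{..<0}"]) (use True in \<open>auto simp: Ef_def\<close>)
    then show ?thesis using True by (simp add: Ef_def)
  next
    case False
    with \<open>\<not> s > 0\<close> have s0: "s = 0" by simp
    have "((\<lambda>y. (Ef P y - Ef P 0) / (y - 0)) \<longlongrightarrow> 0) (at 0)"
    proof (rule filterlim_split_at)
      have "\<forall>\<^sub>F y in at_left (0::real). 0 = (Ef P y - Ef P 0) / (y - 0)"
        by (auto simp: Ef_def eventually_at_left_field intro!: exI[of _ "-1"])
      then show "((\<lambda>y. (Ef P y - Ef P 0) / (y - 0)) \<longlongrightarrow> 0) (at_left 0)"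
        by (rule Lim_transform_eventually[OF tendsto_const])
    next
      have "((\<lambda>x. poly (pCons 0 P) x * exp (- x)) \<longlongrightarrow> 0) at_top" by (rule poly_exp_lim)
      moreover have "\<forall>\<^sub>F x in at_top. poly (pCons 0 P) x * exp (- x) = (\<lambda>y. (Ef P y - Ef P 0) / (y - 0)) (inverse x)"
        using eventually_gt_at_top[of 0] by eventually_elim (simp add: Ef_def field_simps)
      ultimately have "((\<lambda>x. (\<lambda>y. (Ef P y - Ef P 0) / (y - 0)) (inverse x)) \<longlongrightarrow> 0) at_top"
        by (rule Lim_transform_eventually)
      then show "((\<lambda>y. (Ef P y - Ef P 0) / (y - 0)) \<longlongrightarrow> 0) (at_right 0)"
        unfolding filterlim_at_right_to_top .
    qed
    then have "(Ef P has_real_derivative 0) (at 0)"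
      unfolding has_field_derivative_iff by simp
    then show ?thesis using s0 by (simp add: Ef_def)
  qed
qed

lemma Qn_Ef: "Qn n (Ef P)"
proof (induction n arbitrary: P)
  case 0 then show ?case by simp
next
  case (Suc n)
  have "deriv (Ef P) = Ef (Pnext P)" by (rule deriv_eqI) (rule Ef_deriv)
  moreover have "\<forall>x. Ef P differentiable at x" using Ef_deriv real_differentiable_def by blast
  ultimately show ?case using Suc by simp
qed

lemma smooth1_Ef: "smooth1 (Ef P)"
  unfolding smooth1_Qn using Qn_Ef by blast

lemma Ef1_pos: "s > 0 \<Longrightarrow> Ef 1 s > 0" and Ef1_nonneg: "Ef 1 s \<ge> 0" and Ef1_zero: "s \<le> 0 \<Longrightarrow> Ef 1 s = 0"
  by (auto simp: Ef_def)


lemma int_halfline: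
  fixes f :: "real \<Rightarrow> real" and a b c t :: real
  assumes cont: "continuous_on UNIV f" and supp: "\<And>s. s \<notin> {a..b} \<Longrightarrow> f s = 0"
    and "c \<le> a" "c \<le> t"
  shows "(f has_integral (integral {c..t} f)) {..t}"
proof -
  have "(f has_integral (integral {c..t} f)) {c..t}"
    using integrable_continuous_interval[OF continuous_on_subset[OF cont]] by auto
  moreover have e1: "{x \<in> {c..t} - {..t}. f x \<noteq> 0} = {}" by auto
  have e2: "{x \<in> {..t} - {c..t}. f x \<noteq> 0} = {}" using supp assms(3) by force
  have n1: "negligible {x \<in> {c..t} - {..t}. f x \<noteq> 0}" by (simp only: e1 negligible_empty)
  have n2: "negligible {x \<in> {..t} - {c..t}. f x \<noteq> 0}" by (simp only: e2 negligible_empty)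
  ultimately show ?thesis using has_integral_spike_set_eq[OF n1 n2] by blast
qed

lemma int_univ:
  fixes f :: "real \<Rightarrow> real" and a b c t :: real
  assumes cont: "continuous_on UNIV f" and supp: "\<And>s. s \<notin> {a..b} \<Longrightarrow> f s = 0"
    and "c \<le> a" "b \<le> t"
  shows "(f has_integral (integral {c..t} f)) UNIV"
proof -
  have "(f has_integral (integral {c..t} f)) {c..t}"
    using integrable_continuous_interval[OF continuous_on_subset[OF cont]] by auto
  moreover have e1: "{x \<in> {c..t} - UNIV. f x \<noteq> 0} = {}" by auto
  have e2: "{x \<in> UNIV - {c..t}. f x \<noteq> 0} = {}" using supp assms(3,4) by force
  have n1: "negligible {x \<in> {c..t} - UNIV. f x \<noteq> 0}" by (simp only: e1 negligible_empty)
  have n2: "negligible {x \<in> UNIV - {c..t}. f x \<noteq> 0}" by (simp only: e2 negligible_empty)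
  ultimately show ?thesis using has_integral_spike_set_eq[OF n1 n2] by blast
qed

lemma antideriv_props:
  fixes f :: "real \<Rightarrow> real" and a b t :: real
  assumes cont: "continuous_on UNIV f" and supp: "\<And>s. s \<notin> {a..b} \<Longrightarrow> f s = 0"
  shows antideriv_deriv: "((\<lambda>t. integral {..t} f) has_real_derivative f t) (at t)"
    and antideriv_low: "t \<le> a \<Longrightarrow> integral {..t} f = 0"
    and antideriv_high: "b \<le> t \<Longrightarrow> integral {..t} f = integral UNIV f"
    and antideriv_int: "f integrable_on {..t}"
    and antideriv_intU: "f integrable_on UNIV"
proof -
  show "f integrable_on {..t}"
    using int_halfline[of f a b "min a t" t, OF cont supp] by auto
  show "f integrable_on UNIV"
    using int_univ[of f a b a "max b a", OF cont supp] by auto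
  show "t \<le> a \<Longrightarrow> integral {..t} f = 0"
    using int_halfline[of f a b t t, OF cont supp] by (simp add: integral_unique)
  show "b \<le> t \<Longrightarrow> integral {..t} f = integral UNIV f"
  proof -
    assume bt: "b \<le> t"
    define c where "c = min a t"
    have "integral {..t} f = integral {c..t} f"
      using int_halfline[of f a b c t, OF cont supp] c_def by (simp add: integral_unique)
    also have "\<dots> = integral UNIV f"
      using int_univ[of f a b c t, OF cont supp] c_def bt by (simp add: integral_unique)
    finally show ?thesis .
  qed
  define c where "c = min a (t - 1)"
  have eq: "integral {..x} f = integral {c..x} f" if "x \<in> {c<..}" for x
    using int_halfline[of f a b c x, OF cont supp] c_def that by (simp add: integral_unique)
  have "((\<lambda>x. integral {c..x} f) has_real_derivative f t) (at t within {c..t+1})"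
    by (rule integral_has_real_derivative[OF continuous_on_subset[OF cont]]) (auto simp: c_def)
  moreover have "at t within {c..t+1} = at t"
    by (rule at_within_open_subset[of _ "{c<..<t+1}"]) (auto simp: c_def)
  ultimately have "((\<lambda>x. integral {c..x} f) has_real_derivative f t) (at t)" by simp
  then show "((\<lambda>t. integral {..t} f) has_real_derivative f t) (at t)"
    by (rule has_field_derivative_transform_within_open[of _ _ _ "{c<..}"]) (auto simp: eq c_def)
qed

lemma smooth1_antideriv:
  assumes "smooth1 f" and supp: "\<And>s. s \<notin> {a..b} \<Longrightarrow> f s = 0"
  shows "smooth1 (\<lambda>t. integral {..t} f)"
  unfolding smooth1_Qn
proof
  fix n
  have d: "((\<lambda>t. integral {..t} f) has_real_derivative f t) (at t)" for t
    by (rule antideriv_deriv[OF smooth1_cont[OF assms(1)] supp])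
  have "deriv (\<lambda>t. integral {..t} f) = f" by (rule deriv_eqI) (rule d)
  moreover have "\<forall>x. (\<lambda>t. integral {..t} f) differentiable at x" using d real_differentiable_def by blast
  moreover have "\<forall>n. Qn n f" using assms(1) smooth1_Qn by blast
  ultimately show "Qn n (\<lambda>t. integral {..t} f)"
    by (cases n) auto
qed

definition bump :: "real \<Rightarrow> real \<Rightarrow> real \<Rightarrow> real" where
  "bump a b s = Ef 1 (s - a) * Ef 1 (b - s)"

lemma smooth1_bump: "smooth1 (bump a b)"
proof -
  have "smooth1 (\<lambda>s. 1 * Ef 1 (1 * s + - a))" by (rule smooth1_affine[OF smooth1_Ef])
  moreover have "smooth1 (\<lambda>s. 1 * Ef 1 ((-1) * s + b))" by (rule smooth1_affine[OF smooth1_Ef])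
  ultimately have "smooth1 (\<lambda>s. (1 * Ef 1 (1 * s + - a)) * (1 * Ef 1 ((-1) * s + b)))"
    by (rule smooth1_mult)
  then show ?thesis unfolding bump_def by simp
qed

lemma bump_supp: "s \<notin> {a..b} \<Longrightarrow> bump a b s = 0"
  by (auto simp: bump_def Ef1_zero)

lemma bump_nonneg: "bump a b s \<ge> 0"
  by (auto simp: bump_def Ef1_nonneg)

lemma bump_pos: "a < s \<Longrightarrow> s < b \<Longrightarrow> bump a b s > 0"
  by (auto simp: bump_def Ef1_pos)

lemma bump_cont: "continuous_on S (bump a b)"
  using smooth1_cont[OF smooth1_bump] .

lemma bump_int_pos:
  assumes "a < b" shows "integral UNIV (bump a b) > 0"
proof -
  have hi: "(bump a b has_integral (integral {a..b} (bump a b))) UNIV"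
    by (rule int_univ[OF bump_cont bump_supp]) auto
  have i: "(bump a b has_integral (integral {a..b} (bump a b))) {a..b}"
    using integrable_continuous_interval[OF bump_cont] by auto
  have nn: "integral {a..b} (bump a b) \<ge> 0"
    using has_integral_nonneg[OF i bump_nonneg] .
  have "integral {a..b} (bump a b) \<noteq> 0"
  proof
    assume z: "integral {a..b} (bump a b) = 0"
    have "bump a b ((a+b)/2) = 0"
      by (rule has_integral_0_cbox_imp_0[of a b "bump a b"]) (use i z assms bump_cont bump_nonneg in auto)
    moreover have "bump a b ((a+b)/2) > 0" using assms by (intro bump_pos) auto
    ultimately show False by simp
  qed
  with nn hi show ?thesis by (simp add: integral_unique)
qed

lemma psi_exists:
  fixes T :: real
  obtains \<psi> where "smooth1 \<psi>" "compact (closure {s. \<psi> s \<noteq> 0})" "(\<psi> has_integral 1) UNIV"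
    "closure {s. \<psi> s \<noteq> 0} \<subseteq> {T-2..T-1}"
proof -
  define c where "c = integral UNIV (bump (T-2) (T-1))"
  have c: "c > 0" unfolding c_def by (rule bump_int_pos) simp
  define \<psi> where "\<psi> = (\<lambda>s. (1/c) * bump (T-2) (T-1) (1 * s + 0))"
  have "smooth1 \<psi>" unfolding \<psi>_def by (rule smooth1_affine[OF smooth1_bump])
  moreover have sub: "closure {s. \<psi> s \<noteq> 0} \<subseteq> {T-2..T-1}"
  proof (rule closure_minimal)
    have "\<And>x. bump (T-2) (T-1) x \<noteq> 0 \<Longrightarrow> x \<in> {T-2..T-1}" using bump_supp by blast
    then show "{s. \<psi> s \<noteq> 0} \<subseteq> {T-2..T-1}" by (auto simp: \<psi>_def)
  qed simp
  moreover have "compact (closure {s. \<psi> s \<noteq> 0})"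
    unfolding compact_closure using sub closure_subset
    by (meson bounded_closed_interval bounded_subset order_trans)
  moreover have "(\<psi> has_integral 1) UNIV"
  proof -
    have "(bump (T-2) (T-1) has_integral c) UNIV"
      unfolding c_def using antideriv_intU[OF bump_cont bump_supp] by auto
    from has_integral_mult_right[OF this, of "1/c"] show ?thesis
      using c by (simp add: \<psi>_def)
  qed
  ultimately show ?thesis using that by blast
qed

definition step :: "real \<Rightarrow> real \<Rightarrow> real \<Rightarrow> real" where
  "step a b s = 1 - integral {..s} (bump a b) / integral UNIV (bump a b)"

lemma smooth1_step: "smooth1 (step a b)"
proof -
  have A: "smooth1 (\<lambda>t. integral {..t} (bump a b))"
    by (rule smooth1_antideriv[OF smooth1_bump bump_supp])
  have B: "smooth1 (\<lambda>s. (- 1 / integral UNIV (bump a b)) * (\<lambda>t. integral {..t} (bump a b)) (1 * s + 0))"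
    by (rule smooth1_affine[OF A])
  have C: "smooth1 (\<lambda>s. 1 + (\<lambda>s. (- 1 / integral UNIV (bump a b)) * (\<lambda>t. integral {..t} (bump a b)) (1 * s + 0)) s)"
    by (rule smooth1_add[OF smooth1_const B])
  have "step a b = (\<lambda>s. 1 + (\<lambda>s. (- 1 / integral UNIV (bump a b)) * (\<lambda>t. integral {..t} (bump a b)) (1 * s + 0)) s)"
    by (rule ext) (simp add: step_def divide_inverse algebra_simps)
  with C show ?thesis by simp
qed

lemma step_low: "s \<le> a \<Longrightarrow> step a b s = 1"
  unfolding step_def using antideriv_low[OF bump_cont bump_supp] by simp

lemma step_high: "a < b \<Longrightarrow> b \<le> s \<Longrightarrow> step a b s = 0"
  unfolding step_def using antideriv_high[OF bump_cont bump_supp, where a=a and b=b and t=s] bump_int_pos[of a b] by simp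


lemma smooth_comp1:
  assumes q: "smooth q" shows "smooth1 g \<Longrightarrow> smooth (\<lambda>x. g (q x))"
proof -
  have "\<forall>g. smooth1 g \<longrightarrow> Pn n (\<lambda>x. g (q x))" for n
  proof (induction n)
    case 0 then show ?case by simp
  next
    case (Suc n)
    show ?case
    proof (intro allI impI)
      fix g assume g: "smooth1 g"
      have c: "continuous_on UNIV (\<lambda>x. g (q x))"
        using continuous_on_compose2[OF smooth1_cont[OF g, of UNIV] smooth_cont[OF q]] by simp
      have d: "((\<lambda>t. (\<lambda>x. g (q x)) (x + t *\<^sub>R axis i 1)) has_real_derivative
          (\<lambda>i x. deriv g (q x) * pderivs [i] q x) i x) (at 0)" for i x
      proof -
        have "(g has_real_derivative deriv g (q x)) (at (q (x + 0 *\<^sub>R axis i 1)))"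
          using smooth1_D[OF g] by simp
        from DERIV_chain2[OF this pdiff_D[OF smooth_pdiff[OF q]]] show ?thesis by simp
      qed
      have "Pn n (\<lambda>x. deriv g (q x) * pderivs [i] q x)" for i
      proof (rule Pn_mult)
        show "Pn n (\<lambda>x. deriv g (q x))" using Suc.IH smooth1_deriv[OF g] by blast
        show "Pn n (pderivs [i] q)" using smooth_D[OF q] smooth_Pn by blast
      qed
      then show "Pn (Suc n) (\<lambda>x. g (q x))" using pdiffI[OF c d] by simp
    qed
  qed
  then show "smooth1 g \<Longrightarrow> smooth (\<lambda>x. g (q x))" unfolding smooth_Pn by blast
qed

lemma pderivs_vanish:
  fixes f :: "real^'n::finite \<Rightarrow> real"
  assumes Ob: "open Ob" and z: "\<And>y. y \<in> Ob \<Longrightarrow> f y = 0"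
  shows "x \<in> Ob \<Longrightarrow> pderivs xs f x = 0"
proof (induction xs arbitrary: x)
  case Nil then show ?case using z by simp
next
  case (Cons i xs)
  let ?S = "(\<lambda>t. x + t *\<^sub>R axis i 1) -` Ob"
  have oS: "open ?S" by (rule continuous_open_vimage[OF Ob]) (intro continuous_intros)
  have "((\<lambda>t. 0) has_real_derivative 0) (at 0)" by simp
  then have "((\<lambda>t. pderivs xs f (x + t *\<^sub>R axis i 1)) has_real_derivative 0) (at 0)"
  proof (rule has_field_derivative_transform_within_open[OF _ oS])
    show "0 \<in> ?S" using Cons.prems by simp
    fix t assume "t \<in> ?S"
    then have "x + t *\<^sub>R axis i 1 \<in> Ob" by simp
    then show "0 = pderivs xs f (x + t *\<^sub>R axis i 1)" using Cons.IH by simp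
  qed
  then show ?case by (simp add: pderivs.simps(2) DERIV_imp_deriv)
qed

lemma pderivs_supp:
  fixes f :: "real^'n::finite \<Rightarrow> real"
  shows "x \<notin> closure {y. f y \<noteq> 0} \<Longrightarrow> pderivs xs f x = 0"
proof -
  assume x: "x \<notin> closure {y. f y \<noteq> 0}"
  show ?thesis
  proof (rule pderivs_vanish[where Ob="- closure {y. f y \<noteq> 0}"])
    show "open (- closure {y. f y \<noteq> 0})" by (rule open_Compl) (rule closed_closure)
    show "x \<in> - closure {y. f y \<noteq> 0}" using x by simp
    fix y assume "y \<in> - closure {y. f y \<noteq> 0}"
    then show "f y = 0" using closure_subset[of "{y. f y \<noteq> 0}"] by auto
  qed
qed

lemma closure_supp_D:
  fixes f :: "real^'n::finite \<Rightarrow> real"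
  shows "closure {y. pderivs [i] f y \<noteq> 0} \<subseteq> closure {y. f y \<noteq> 0}"
proof (rule closure_minimal)
  show "{y. pderivs [i] f y \<noteq> 0} \<subseteq> closure {y. f y \<noteq> 0}"
  proof
    fix y assume "y \<in> {y. pderivs [i] f y \<noteq> 0}"
    then show "y \<in> closure {y. f y \<noteq> 0}" using pderivs_supp[of y f "[i]"] by blast
  qed
qed simp

definition chi :: "real^'n::finite \<Rightarrow> real \<Rightarrow> real^'n \<Rightarrow> real" where
  "chi p r x = step (r^2) (4 * r^2) ((x - p) \<bullet> (x - p))"

lemma smooth_coord_diff: "smooth (\<lambda>x::real^'n::finite. x $ j - c)"
  using smooth_diff[OF smooth_coord[of j] smooth_const[of c]] by simp

lemma smooth_sqdist: "smooth (\<lambda>x::real^'n::finite. (x - p) \<bullet> (x - p))"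
proof -
  have "smooth (\<lambda>x::real^'n. \<Sum>j\<in>UNIV. (x $ j - p $ j) * (x $ j - p $ j))"
  proof (rule smooth_sum)
    fix j :: 'n
    show "smooth (\<lambda>x::real^'n. (x $ j - p $ j) * (x $ j - p $ j))" by (rule smooth_mult[OF smooth_coord_diff smooth_coord_diff])
  qed simp
  moreover have "(\<lambda>x::real^'n. (x - p) \<bullet> (x - p)) = (\<lambda>x. \<Sum>j\<in>UNIV. (x $ j - p $ j) * (x $ j - p $ j))"
    by (auto simp: inner_vec_def)
  ultimately show ?thesis by simp
qed

lemma smooth_chi: "smooth (chi p r)"
  unfolding chi_def[abs_def] by (rule smooth_comp1[OF smooth_sqdist smooth1_step])

lemma sqdist_eq: "(x - p) \<bullet> (x - p) = (dist x p)^2"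
  by (simp add: dist_norm power2_norm_eq_inner)

lemma chi_one: "r > 0 \<Longrightarrow> dist x p \<le> r \<Longrightarrow> chi p r x = 1"
  unfolding chi_def sqdist_eq
  by (rule step_low) (simp add: power_mono)

lemma chi_zero: "r > 0 \<Longrightarrow> dist x p \<ge> 2 * r \<Longrightarrow> chi p r x = 0"
proof -
  assume r: "r > 0" and d: "dist x p \<ge> 2 * r"
  have "(2 * r)^2 \<le> (dist x p)^2" using d r by (intro power_mono) auto
  then have "4 * r^2 \<le> (dist x p)^2" by (simp add: power2_eq_square)
  then show ?thesis unfolding chi_def sqdist_eq
    by (intro step_high) (use r in auto)
qed

lemma test_fun_chi:
  assumes g: "smooth g" and r: "r > 0" and V: "cball p (2 * r) \<subseteq> V"
  shows "test_fun_on V (\<lambda>x. g x * chi p r x)"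
proof -
  have sub: "{x. g x * chi p r x \<noteq> 0} \<subseteq> cball p (2 * r)"
    using chi_zero[OF r] by (force simp: dist_commute)
  have cl: "closure {x. g x * chi p r x \<noteq> 0} \<subseteq> cball p (2 * r)"
    by (rule closure_minimal[OF sub]) simp
  show ?thesis unfolding test_fun_on_def
  proof (intro conjI)
    show "smooth (\<lambda>x. g x * chi p r x)" by (rule smooth_mult[OF g smooth_chi])
    show "compact (closure {x. g x * chi p r x \<noteq> 0})"
      unfolding compact_closure using sub bounded_cball bounded_subset by blast
    show "closure {x. g x * chi p r x \<noteq> 0} \<subseteq> V" using cl V by blast
  qed
qed


lemma cd_add: "compact_distr w \<Longrightarrow> smooth f \<Longrightarrow> smooth g \<Longrightarrow> w (\<lambda>x. f x + g x) = w f + w g"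
  unfolding compact_distr_def by blast

lemma cd_cmult: "compact_distr w \<Longrightarrow> smooth f \<Longrightarrow> w (\<lambda>x. c * f x) = c *\<^sub>R w f"
  unfolding compact_distr_def by blast

lemma cd_diff: "compact_distr w \<Longrightarrow> smooth f \<Longrightarrow> smooth g \<Longrightarrow> w (\<lambda>x. f x - g x) = w f - w g"
proof -
  assume w: "compact_distr w" and f: "smooth f" and g: "smooth g"
  have "w (\<lambda>x. f x + (\<lambda>x. (-1) * g x) x) = w f + w (\<lambda>x. (-1) * g x)"
    by (rule cd_add[OF w f smooth_cmult[OF g]])
  also have "w (\<lambda>x. (-1) * g x) = (-1) *\<^sub>R w g" by (rule cd_cmult[OF w g])
  finally show ?thesis by simp
qed

lemma cd_bound0:
  assumes "compact_distr w"
  obtains K where "compact K" "\<And>f. smooth f \<Longrightarrow> (\<And>xs x. x \<in> K \<Longrightarrow> pderivs xs f x = 0) \<Longrightarrow> w f = 0"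
proof -
  obtain K C N where K: "compact K" and b: "\<And>\<phi> M. smooth \<phi> \<Longrightarrow>
         (\<forall>xs x. length xs \<le> N \<longrightarrow> x \<in> K \<longrightarrow> \<bar>pderivs xs \<phi> x\<bar> \<le> M) \<Longrightarrow> norm (w \<phi>) \<le> C * M"
    using assms unfolding compact_distr_def by metis
  have "w f = 0" if "smooth f" "\<And>xs x. x \<in> K \<Longrightarrow> pderivs xs f x = 0" for f
    using b[OF that(1), of 0] that(2) by simp
  then show ?thesis using that K by blast
qed

lemma dsupp_bounded:
  assumes "compact_distr w"
  obtains K where "compact K" "dsupp w \<subseteq> K"
proof -
  obtain K where K: "compact K" and K0: "\<And>f. smooth f \<Longrightarrow> (\<And>xs x. x \<in> K \<Longrightarrow> pderivs xs f x = 0) \<Longrightarrow> w f = 0"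
    using cd_bound0[OF assms] by blast
  have "distr_eq_on (- K) w (\<lambda>_. 0)"
    unfolding distr_eq_on_def
  proof (intro allI impI)
    fix \<phi> assume t: "test_fun_on (- K) \<phi>"
    show "w \<phi> = 0"
    proof (rule K0)
      show "smooth \<phi>" using t test_fun_on_def by blast
      fix xs x assume "x \<in> K"
      then have "x \<notin> closure {y. \<phi> y \<noteq> 0}" using t unfolding test_fun_on_def by blast
      then show "pderivs xs \<phi> x = 0" by (rule pderivs_supp)
    qed
  qed
  moreover have "open (- K)" using K compact_imp_closed by blast
  ultimately have "dsupp w \<subseteq> K" unfolding dsupp_def by blast
  then show ?thesis using that K by blast
qed

lemma localize:
  assumes w: "compact_distr w" and f: "smooth f" and W: "open W" "dsupp w \<subseteq> W"
    and fz: "\<And>x. x \<in> W \<Longrightarrow> f x = 0"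
  shows "w f = 0"
proof -
  obtain K where K: "compact K" and K0: "\<And>f. smooth f \<Longrightarrow> (\<And>xs x. x \<in> K \<Longrightarrow> pderivs xs f x = 0) \<Longrightarrow> w f = 0"
    using cd_bound0[OF w] by blast
  define K' where "K' = K - W"
  have cK': "compact K'" unfolding K'_def using K W(1) compact_diff by blast
  have ex: "\<forall>p\<in>K'. \<exists>rv. fst rv > 0 \<and> distr_eq_on (snd rv) w (\<lambda>_. 0) \<and> cball p (2 * fst rv) \<subseteq> snd rv"
  proof
    fix p assume "p \<in> K'"
    then have "p \<notin> dsupp w" using W(2) K'_def by blast
    then obtain V where V: "open V" "distr_eq_on V w (\<lambda>_. 0)" "p \<in> V" unfolding dsupp_def by blast
    then obtain e where e: "e > 0" "ball p e \<subseteq> V" using open_contains_ball by blast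
    have "cball p (2 * (e/3)) \<subseteq> ball p e" using e(1) by (auto simp: subset_iff)
    then show "\<exists>rv. fst rv > 0 \<and> distr_eq_on (snd rv) w (\<lambda>_. 0) \<and> cball p (2 * fst rv) \<subseteq> snd rv"
      using e V by (intro exI[of _ "(e/3, V)"]) auto
  qed
  then obtain F where F: "\<forall>p\<in>K'. fst (F p) > 0 \<and> distr_eq_on (snd (F p)) w (\<lambda>_. 0) \<and> cball p (2 * fst (F p)) \<subseteq> snd (F p)"
    using bchoice[OF ex] by blast
  define R where "R p = fst (F p)" for p
  have Fp: "R p > 0" "distr_eq_on (snd (F p)) w (\<lambda>_. 0)" "cball p (2 * R p) \<subseteq> snd (F p)" if "p \<in> K'" for p
    using F that unfolding R_def by simp_all
  have cov: "K' \<subseteq> (\<Union>p\<in>K'. ball p (R p))"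
  proof
    fix p assume "p \<in> K'"
    then show "p \<in> (\<Union>p\<in>K'. ball p (R p))" using Fp(1)[of p] by (intro UN_I[of p]) auto
  qed
  obtain T where T: "T \<subseteq> K'" "finite T" "K' \<subseteq> (\<Union>p\<in>T. ball p (R p))"
    using compactE_image[OF cK' _ cov] by blast
  have TK: "p \<in> K'" if "p \<in> T" for p using T(1) that by (rule subsetD)
  have Rpos: "R p > 0" if "p \<in> T" for p using Fp(1)[OF TK[OF that]] .
  have key1: "w (\<lambda>x. g x * chi p (R p) x) = 0" if "p \<in> T" "smooth g" for p g
  proof -
    have "test_fun_on (snd (F p)) (\<lambda>x. g x * chi p (R p) x)"
      by (rule test_fun_chi[OF that(2) Rpos[OF that(1)] Fp(3)[OF TK[OF that(1)]]])
    moreover have "distr_eq_on (snd (F p)) w (\<lambda>_. 0)" using Fp(2)[OF TK[OF that(1)]] .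
    ultimately show ?thesis unfolding distr_eq_on_def by blast
  qed
  have smP: "smooth (\<lambda>x. \<Prod>q\<in>S. 1 - chi q (R q) x)" if "finite S" for S
    by (rule smooth_prod[OF that]) (rule smooth_diff[OF smooth_const smooth_chi])
  have key2: "S \<subseteq> T \<Longrightarrow> w (\<lambda>x. f x * (\<Prod>q\<in>S. 1 - chi q (R q) x)) = w f" for S
  proof -
    assume "S \<subseteq> T"
    then have fin: "finite S" using T(2) finite_subset by blast
    from fin \<open>S \<subseteq> T\<close> show ?thesis
    proof (induction S rule: finite_induct)
      case empty then show ?case by simp
    next
      case (insert q S)
      define h where "h = (\<lambda>x. f x * (\<Prod>q\<in>S. 1 - chi q (R q) x))"
      have sh: "smooth h" unfolding h_def by (rule smooth_mult[OF f smP[OF insert(1)]])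
      have "(\<lambda>x. f x * (\<Prod>q\<in>insert q S. 1 - chi q (R q) x)) = (\<lambda>x. h x + (\<lambda>x. (-1) * (h x * chi q (R q) x)) x)"
        using insert(1,2) by (auto simp: h_def algebra_simps)
      then have "w (\<lambda>x. f x * (\<Prod>q\<in>insert q S. 1 - chi q (R q) x)) = w (\<lambda>x. h x + (\<lambda>x. (-1) * (h x * chi q (R q) x)) x)"
        by (simp only:)
      also have "\<dots> = w h + w (\<lambda>x. (-1) * (h x * chi q (R q) x))"
        by (rule cd_add[OF w sh smooth_cmult[OF smooth_mult[OF sh smooth_chi]]])
      also have "w (\<lambda>x. (-1) * (h x * chi q (R q) x)) = (-1) *\<^sub>R w (\<lambda>x. h x * chi q (R q) x)"
        by (rule cd_cmult[OF w smooth_mult[OF sh smooth_chi]])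
      also have "w (\<lambda>x. h x * chi q (R q) x) = 0" using key1 insert(4) sh by blast
      also have "w h = w f" unfolding h_def using insert by blast
      finally show ?case by simp
    qed
  qed
  define g where "g = (\<lambda>x. f x * (\<Prod>q\<in>T. 1 - chi q (R q) x))"
  define Ob where "Ob = W \<union> (\<Union>p\<in>T. ball p (R p))"
  have oOb: "open Ob" unfolding Ob_def using W(1) by blast
  have gz: "g y = 0" if yO: "y \<in> Ob" for y
  proof (cases "y \<in> W")
    case True then show ?thesis using fz g_def by simp
  next
    case False
    then obtain q where q: "q \<in> T" "y \<in> ball q (R q)" using yO Ob_def by blast
    then have "chi q (R q) y = 1" using Rpos[OF q(1)] by (intro chi_one) (auto simp: dist_commute)
    then have "(\<Prod>q\<in>T. 1 - chi q (R q) y) = 0" using q(1) T(2) by (intro prod_zero) auto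
    then show ?thesis by (simp add: g_def)
  qed
  have "w g = 0"
  proof (rule K0)
    show "smooth g" unfolding g_def by (rule smooth_mult[OF f smP[OF T(2)]])
    fix xs x assume "x \<in> K"
    then have "x \<in> Ob" using T(3) K'_def Ob_def by blast
    then show "pderivs xs g x = 0" using pderivs_vanish[of Ob g, OF oOb gz] by blast
  qed
  moreover have "w g = w f" unfolding g_def by (rule key2) simp
  ultimately show ?thesis by simp
qed


lemma cd_minus:
  assumes w1: "compact_distr w1" and w2: "compact_distr w2"
  shows "compact_distr (\<lambda>\<phi>. w1 \<phi> - w2 \<phi>)"
proof -
  obtain K1 C1 N1 where K1: "compact K1" and b1: "\<And>\<phi> M. smooth \<phi> \<Longrightarrow>
         (\<forall>xs x. length xs \<le> N1 \<longrightarrow> x \<in> K1 \<longrightarrow> \<bar>pderivs xs \<phi> x\<bar> \<le> M) \<Longrightarrow> norm (w1 \<phi>) \<le> C1 * M"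
  proof -
    have "\<exists>K C N. compact K \<and> (\<forall>\<phi> M. smooth \<phi> \<longrightarrow>
         (\<forall>xs x. length xs \<le> N \<longrightarrow> x \<in> K \<longrightarrow> \<bar>pderivs xs \<phi> x\<bar> \<le> M) \<longrightarrow> norm (w1 \<phi>) \<le> C * M)"
      using w1 unfolding compact_distr_def by (elim conjE)
    then show ?thesis using that by blast
  qed
  obtain K2 C2 N2 where K2: "compact K2" and b2: "\<And>\<phi> M. smooth \<phi> \<Longrightarrow>
         (\<forall>xs x. length xs \<le> N2 \<longrightarrow> x \<in> K2 \<longrightarrow> \<bar>pderivs xs \<phi> x\<bar> \<le> M) \<Longrightarrow> norm (w2 \<phi>) \<le> C2 * M"
  proof -
    have "\<exists>K C N. compact K \<and> (\<forall>\<phi> M. smooth \<phi> \<longrightarrow>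
         (\<forall>xs x. length xs \<le> N \<longrightarrow> x \<in> K \<longrightarrow> \<bar>pderivs xs \<phi> x\<bar> \<le> M) \<longrightarrow> norm (w2 \<phi>) \<le> C * M)"
      using w2 unfolding compact_distr_def by (elim conjE)
    then show ?thesis using that by blast
  qed
  have bnd: "norm (w1 \<phi> - w2 \<phi>) \<le> (C1 + C2) * M" if s: "smooth \<phi>"
    and h: "\<forall>xs x. length xs \<le> max N1 N2 \<longrightarrow> x \<in> K1 \<union> K2 \<longrightarrow> \<bar>pderivs xs \<phi> x\<bar> \<le> M" for \<phi> M
  proof -
    have "norm (w1 \<phi>) \<le> C1 * M" by (rule b1[OF s]) (use h in simp)
    moreover have "norm (w2 \<phi>) \<le> C2 * M" by (rule b2[OF s]) (use h in simp)
    ultimately show ?thesis using norm_triangle_ineq4[of "w1 \<phi>" "w2 \<phi>"] by (simp add: distrib_right)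
  qed
  show ?thesis unfolding compact_distr_def
  proof (intro conjI)
    show "\<forall>\<phi> \<psi>. smooth \<phi> \<longrightarrow> smooth \<psi> \<longrightarrow> w1 (\<lambda>x. \<phi> x + \<psi> x) - w2 (\<lambda>x. \<phi> x + \<psi> x) = w1 \<phi> - w2 \<phi> + (w1 \<psi> - w2 \<psi>)"
    proof (intro allI impI)
      fix \<phi> \<psi> :: "real^'a \<Rightarrow> real" assume a: "smooth \<phi>" "smooth \<psi>"
      show "w1 (\<lambda>x. \<phi> x + \<psi> x) - w2 (\<lambda>x. \<phi> x + \<psi> x) = w1 \<phi> - w2 \<phi> + (w1 \<psi> - w2 \<psi>)"
        unfolding cd_add[OF w1 a] cd_add[OF w2 a] by (simp add: algebra_simps)
    qed
    show "\<forall>c \<phi>. smooth \<phi> \<longrightarrow> w1 (\<lambda>x. c * \<phi> x) - w2 (\<lambda>x. c * \<phi> x) = c *\<^sub>R (w1 \<phi> - w2 \<phi>)"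
    proof (intro allI impI)
      fix c \<phi> assume a: "smooth (\<phi>::real^'a \<Rightarrow> real)"
      show "w1 (\<lambda>x. c * \<phi> x) - w2 (\<lambda>x. c * \<phi> x) = c *\<^sub>R (w1 \<phi> - w2 \<phi>)"
        unfolding cd_cmult[OF w1 a] cd_cmult[OF w2 a] by (simp add: scaleR_diff_right)
    qed
    show "\<exists>K C N. compact K \<and> (\<forall>\<phi> M. smooth \<phi> \<longrightarrow>
         (\<forall>xs x. length xs \<le> N \<longrightarrow> x \<in> K \<longrightarrow> \<bar>pderivs xs \<phi> x\<bar> \<le> M) \<longrightarrow>
         norm (w1 \<phi> - w2 \<phi>) \<le> C * M)"
    proof -
      have "compact (K1 \<union> K2)" using K1 K2 by (rule compact_Un)
      moreover have "\<forall>\<phi> M. smooth \<phi> \<longrightarrow>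
         (\<forall>xs x. length xs \<le> max N1 N2 \<longrightarrow> x \<in> K1 \<union> K2 \<longrightarrow> \<bar>pderivs xs \<phi> x\<bar> \<le> M) \<longrightarrow>
         norm (w1 \<phi> - w2 \<phi>) \<le> (C1 + C2) * M" using bnd by blast
      ultimately show ?thesis by blast
    qed
  qed
qed

lemma not_in_dsupp:
  assumes "open V" "distr_eq_on V w (\<lambda>_. 0)" "x \<in> V"
  shows "x \<notin> dsupp w"
proof -
  have "V \<in> {V. open V \<and> distr_eq_on V w (\<lambda>_. 0)}" using assms(1,2) by simp
  then have "x \<in> \<Union>{V. open V \<and> distr_eq_on V w (\<lambda>_. 0)}"
    using assms(3) by (rule UnionI)
  then show ?thesis unfolding dsupp_def by simp
qed

lemma dsupp_obtain:
  assumes "x \<notin> dsupp w"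
  obtains V where "open V" "distr_eq_on V w (\<lambda>_. 0)" "x \<in> V"
proof -
  have "x \<in> \<Union>{V. open V \<and> distr_eq_on V w (\<lambda>_. 0)}" using assms unfolding dsupp_def by (meson DiffI UNIV_I)
  then obtain V where V: "V \<in> {V. open V \<and> distr_eq_on V w (\<lambda>_. 0)}" "x \<in> V" by (rule UnionE)
  from V(1) have "open V" "distr_eq_on V w (\<lambda>_. 0)" by simp_all
  then show ?thesis using V(2) by (rule that)
qed

lemma dsupp_minus:
  assumes "open U" "distr_eq_on U w1 w2"
  shows "dsupp (\<lambda>\<phi>. w1 \<phi> - w2 \<phi>) \<subseteq> (dsupp w1 \<union> dsupp w2) \<inter> - U"
proof -
  have A: "x \<notin> dsupp (\<lambda>\<phi>. w1 \<phi> - w2 \<phi>)" if "x \<in> U" for x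
  proof -
    have "distr_eq_on U (\<lambda>\<phi>. w1 \<phi> - w2 \<phi>) (\<lambda>_. 0)" using assms(2) unfolding distr_eq_on_def by simp
    then show ?thesis using assms(1) that by (intro not_in_dsupp[of U])
  qed
  have B: "x \<notin> dsupp (\<lambda>\<phi>. w1 \<phi> - w2 \<phi>)" if n1: "x \<notin> dsupp w1" and n2: "x \<notin> dsupp w2" for x
  proof -
    obtain V1 where V1: "open V1" "distr_eq_on V1 w1 (\<lambda>_. 0)" "x \<in> V1" by (rule dsupp_obtain[OF n1])
    obtain V2 where V2: "open V2" "distr_eq_on V2 w2 (\<lambda>_. 0)" "x \<in> V2" by (rule dsupp_obtain[OF n2])
    have "distr_eq_on (V1 \<inter> V2) (\<lambda>\<phi>. w1 \<phi> - w2 \<phi>) (\<lambda>_. 0)"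
      unfolding distr_eq_on_def
    proof (intro allI impI)
      fix \<phi> assume t: "test_fun_on (V1 \<inter> V2) \<phi>"
      then have "test_fun_on V1 \<phi>" "test_fun_on V2 \<phi>" unfolding test_fun_on_def by auto
      then show "w1 \<phi> - w2 \<phi> = 0" using V1(2) V2(2) unfolding distr_eq_on_def by simp
    qed
    moreover have "open (V1 \<inter> V2)" using V1(1) V2(1) by (rule open_Int)
    moreover have "x \<in> V1 \<inter> V2" using V1(3) V2(3) by (rule IntI)
    ultimately show ?thesis by (intro not_in_dsupp[of "V1 \<inter> V2"])
  qed
  show ?thesis
  proof
    fix x assume "x \<in> dsupp (\<lambda>\<phi>. w1 \<phi> - w2 \<phi>)"
    then show "x \<in> (dsupp w1 \<union> dsupp w2) \<inter> - U" using A B by (meson ComplI IntI UnCI)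
  qed
qed


definition csmooth :: "(real^'n::finite \<Rightarrow> real) \<Rightarrow> bool" where
  "csmooth \<phi> \<longleftrightarrow> smooth \<phi> \<and> compact (closure {x. \<phi> x \<noteq> 0})"

lemma csmooth_bound:
  assumes "csmooth \<phi>"
  obtains B where "B \<ge> 0" "\<And>y. y \<in> closure {x. \<phi> x \<noteq> 0} \<Longrightarrow> norm y \<le> B"
proof -
  have "bounded (closure {x. \<phi> x \<noteq> 0})" using assms unfolding csmooth_def using compact_imp_bounded by blast
  then obtain a where a: "\<And>y. y \<in> closure {x. \<phi> x \<noteq> 0} \<Longrightarrow> norm y \<le> a" unfolding bounded_iff by blast
  show ?thesis by (rule that[of "max a 0"]) (use a in force)+
qed

lemma csmooth_D:
  assumes "csmooth \<phi>" shows "csmooth (pderivs [i] \<phi>)"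
proof -
  have sub: "closure {x. pderivs [i] \<phi> x \<noteq> 0} \<subseteq> closure {x. \<phi> x \<noteq> 0}" by (rule closure_supp_D)
  have "bounded (closure {x. \<phi> x \<noteq> 0})" using assms unfolding csmooth_def using compact_imp_bounded by blast
  then have "bounded {x. pderivs [i] \<phi> x \<noteq> 0}" using sub closure_subset bounded_subset by (metis (no_types, lifting) order_trans)
  then show ?thesis using assms smooth_D unfolding csmooth_def compact_closure by blast
qed

lemma int_reduce:
  fixes g :: "real \<Rightarrow> real" and R h :: real
  assumes cont: "continuous_on UNIV g" and z: "\<And>r. R < \<bar>r\<bar> \<Longrightarrow> g r = 0"
    and I: "\<And>r. \<bar>r\<bar> \<le> R \<Longrightarrow> (r \<in> I \<longleftrightarrow> r \<le> h)"
  shows "(g has_integral (integral {-R..h} g)) I"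
proof -
  have i: "(g has_integral (integral {-R..h} g)) {-R..h}"
    using integrable_continuous_interval[OF continuous_on_subset[OF cont]] by auto
  have e1: "{x \<in> {-R..h} - I. g x \<noteq> 0} = {}"
  proof -
    have "False" if "x \<in> {-R..h}" "x \<notin> I" "g x \<noteq> 0" for x
    proof (cases "\<bar>x\<bar> \<le> R")
      case True then show ?thesis using I[OF True] that by auto
    next
      case False then show ?thesis using z that by auto
    qed
    then show ?thesis by blast
  qed
  have e2: "{x \<in> I - {-R..h}. g x \<noteq> 0} = {}"
  proof -
    have "False" if "x \<in> I" "x \<notin> {-R..h}" "g x \<noteq> 0" for x
    proof -
      have "\<bar>x\<bar> \<le> R" using z that(3) by force
      then show False using I that by auto
    qed
    then show ?thesis by blast
  qed
  have n1: "negligible {x \<in> {-R..h} - I. g x \<noteq> 0}" by (simp only: e1 negligible_empty)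
  have n2: "negligible {x \<in> I - {-R..h}. g x \<noteq> 0}" by (simp only: e2 negligible_empty)
  show ?thesis using has_integral_spike_set_eq[OF n1 n2] i by blast
qed

lemma line_zero:
  fixes v x :: "real^'n::finite"
  assumes v: "norm v = 1" and B: "\<And>y. \<phi> y \<noteq> 0 \<Longrightarrow> norm y \<le> B" and x: "norm x \<le> A"
    and r: "A + B < \<bar>r\<bar>"
  shows "\<phi> (x + r *\<^sub>R v) = 0"
proof (rule ccontr)
  assume "\<phi> (x + r *\<^sub>R v) \<noteq> 0"
  then have "norm (x + r *\<^sub>R v) \<le> B" by (rule B)
  moreover have "norm (r *\<^sub>R v) \<le> norm (x + r *\<^sub>R v) + norm x"
    using norm_triangle_ineq4[of "x + r *\<^sub>R v" x] by simp
  moreover have "norm (r *\<^sub>R v) = \<bar>r\<bar>" using v by simp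
  ultimately show False using x r by linarith
qed

definition Jf :: "real set \<Rightarrow> real^'n::finite \<Rightarrow> (real^'n \<Rightarrow> real) \<Rightarrow> real^'n \<Rightarrow> real" where
  "Jf I v \<phi> x = integral I (\<lambda>r. \<phi> (x + r *\<^sub>R v))"

lemma cont_line:
  fixes \<phi> :: "'a::real_normed_vector \<Rightarrow> 'b::topological_space" and x v :: 'a
  assumes "continuous_on UNIV \<phi>" shows "continuous_on S (\<lambda>r::real. \<phi> (x + r *\<^sub>R v))"
proof (rule continuous_on_compose2[OF assms])
  show "continuous_on S (\<lambda>r. x + r *\<^sub>R v)" by (intro continuous_intros)
qed simp

lemma J_local:
  fixes v :: "real^'n::finite"
  assumes v: "norm v = 1" and cs: "csmooth \<phi>"
    and B: "\<And>y. y \<in> closure {x. \<phi> x \<noteq> 0} \<Longrightarrow> norm y \<le> B"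
    and HI: "\<And>r. \<bar>r\<bar> \<le> A + B \<Longrightarrow> (r \<in> I \<longleftrightarrow> r \<le> h)"
    and x: "norm x \<le> A"
  shows "((\<lambda>r. \<phi> (x + r *\<^sub>R v)) has_integral (integral {-(A+B)..h} (\<lambda>r. \<phi> (x + r *\<^sub>R v)))) I"
    and "Jf I v \<phi> x = integral {-(A+B)..h} (\<lambda>r. \<phi> (x + r *\<^sub>R v))"
proof -
  have B': "norm y \<le> B" if "\<phi> y \<noteq> 0" for y
  proof (rule B)
    show "y \<in> closure {x. \<phi> x \<noteq> 0}" using that closure_subset[of "{x. \<phi> x \<noteq> 0}"] by auto
  qed
  show *: "((\<lambda>r. \<phi> (x + r *\<^sub>R v)) has_integral (integral {-(A+B)..h} (\<lambda>r. \<phi> (x + r *\<^sub>R v)))) I"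
  proof (rule int_reduce)
    show "continuous_on UNIV (\<lambda>r. \<phi> (x + r *\<^sub>R v))"
    proof (rule cont_line[OF smooth_cont])
      show "smooth \<phi>" using cs unfolding csmooth_def by (rule conjunct1)
    qed
    show "\<phi> (x + r *\<^sub>R v) = 0" if "A + B < \<bar>r\<bar>" for r
      by (rule line_zero[OF v B' x that])
  qed (rule HI)
  then show "Jf I v \<phi> x = integral {-(A+B)..h} (\<lambda>r. \<phi> (x + r *\<^sub>R v))"
    unfolding Jf_def by (rule integral_unique)
qed


lemma norm_le_ball: "x \<in> ball x0 1 \<Longrightarrow> norm (x::'a::real_normed_vector) \<le> norm x0 + 1"
proof -
  assume "x \<in> ball x0 1"
  then have "norm (x - x0) < 1" by (simp add: dist_norm norm_minus_commute)
  moreover have "norm x \<le> norm x0 + norm (x - x0)" using norm_triangle_sub[of x x0] by simp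
  ultimately show ?thesis by linarith
qed

lemma cont_prod_line:
  fixes \<phi> :: "real^'n::finite \<Rightarrow> real"
  assumes "continuous_on UNIV \<phi>"
  shows "continuous_on S (\<lambda>(x, r). \<phi> (x + r *\<^sub>R v))"
proof -
  have "continuous_on S (\<lambda>p. \<phi> (fst p + snd p *\<^sub>R v))"
  proof (rule continuous_on_compose2[OF assms])
    show "continuous_on S (\<lambda>p. fst p + snd p *\<^sub>R v)" by (intro continuous_intros)
  qed simp
  moreover have "(\<lambda>(x, r). \<phi> (x + r *\<^sub>R v)) = (\<lambda>p. \<phi> (fst p + snd p *\<^sub>R v))" by auto
  ultimately show ?thesis by simp
qed

lemma cont_prod_line2:
  fixes \<phi> :: "real^'n::finite \<Rightarrow> real"
  assumes "continuous_on UNIV \<phi>"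
  shows "continuous_on S (\<lambda>(t, r). \<phi> (x0 + t *\<^sub>R e + r *\<^sub>R v))"
proof -
  have "continuous_on S (\<lambda>p. \<phi> (x0 + fst p *\<^sub>R e + snd p *\<^sub>R v))"
  proof (rule continuous_on_compose2[OF assms])
    show "continuous_on S (\<lambda>p. x0 + fst p *\<^sub>R e + snd p *\<^sub>R v)" by (intro continuous_intros)
  qed simp
  moreover have "(\<lambda>(t, r). \<phi> (x0 + t *\<^sub>R e + r *\<^sub>R v)) = (\<lambda>p. \<phi> (x0 + fst p *\<^sub>R e + snd p *\<^sub>R v))" by auto
  ultimately show ?thesis by simp
qed

lemma J_cont:
  fixes v :: "real^'n::finite"
  assumes v: "norm v = 1" and cs: "csmooth \<phi>" and HI: "\<And>R. \<exists>h. \<forall>r. \<bar>r\<bar> \<le> R \<longrightarrow> (r \<in> I \<longleftrightarrow> r \<le> h)"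
  shows "continuous_on UNIV (Jf I v \<phi>)"
proof -
  obtain B where B0: "B \<ge> 0" and B: "\<And>y. y \<in> closure {x. \<phi> x \<noteq> 0} \<Longrightarrow> norm y \<le> B"
    using csmooth_bound[OF cs] by metis
  have sm: "smooth \<phi>" using cs unfolding csmooth_def by (rule conjunct1)
  have "isCont (Jf I v \<phi>) x0" for x0
  proof -
    define A where "A = norm x0 + 1"
    obtain h where h: "\<And>r. \<bar>r\<bar> \<le> A + B \<Longrightarrow> (r \<in> I \<longleftrightarrow> r \<le> h)" using HI[of "A+B"] by blast
    have eq: "integral (cbox (-(A+B)) h) (\<lambda>r. \<phi> (x + r *\<^sub>R v)) = Jf I v \<phi> x" if "x \<in> ball x0 1" for x
    proof -
      have "norm x \<le> A" using norm_le_ball[OF that] unfolding A_def .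
      from J_local(2)[OF v cs B h this] show ?thesis by (simp add: cbox_interval)
    qed
    have "continuous_on (ball x0 1) (\<lambda>x. integral (cbox (-(A+B)) h) (\<lambda>r. \<phi> (x + r *\<^sub>R v)))"
      by (rule integral_continuous_on_param) (rule cont_prod_line[OF smooth_cont[OF sm]])
    then have "continuous_on (ball x0 1) (Jf I v \<phi>)"
      by (rule continuous_on_eq) (rule eq)
    then show "isCont (Jf I v \<phi>) x0"
      using continuous_on_eq_continuous_at[of "ball x0 1" "Jf I v \<phi>"] by simp
  qed
  then show ?thesis by (simp add: continuous_at_imp_continuous_on)
qed

lemma J_deriv:
  fixes v :: "real^'n::finite"
  assumes v: "norm v = 1" and cs: "csmooth \<phi>" and HI: "\<And>R. \<exists>h. \<forall>r. \<bar>r\<bar> \<le> R \<longrightarrow> (r \<in> I \<longleftrightarrow> r \<le> h)"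
  shows "((\<lambda>t. Jf I v \<phi> (x0 + t *\<^sub>R axis i 1)) has_real_derivative Jf I v (pderivs [i] \<phi>) x0) (at 0)"
proof -
  obtain B where B0: "B \<ge> 0" and B: "\<And>y. y \<in> closure {x. \<phi> x \<noteq> 0} \<Longrightarrow> norm y \<le> B"
    using csmooth_bound[OF cs] by metis
  have sm: "smooth \<phi>" using cs unfolding csmooth_def by (rule conjunct1)
  have csD: "csmooth (pderivs [i] \<phi>)" by (rule csmooth_D[OF cs])
  have BD: "norm y \<le> B" if "y \<in> closure {x. pderivs [i] \<phi> x \<noteq> 0}" for y
    using B closure_supp_D[of i \<phi>] that by (meson subsetD)
  define e :: "real^'n" where "e = axis i 1"
  define A where "A = norm x0 + 1"
  obtain h where h: "\<And>r. \<bar>r\<bar> \<le> A + B \<Longrightarrow> (r \<in> I \<longleftrightarrow> r \<le> h)" using HI[of "A+B"] by blast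
  define U where "U = {-1<..<1::real}"
  have oU: "open U" unfolding U_def by simp
  have U0: "0 \<in> U" unfolding U_def by simp
  have nU: "norm (x0 + t *\<^sub>R e) \<le> A" if "t \<in> U" for t
  proof -
    have "norm (x0 + t *\<^sub>R e) \<le> norm x0 + norm (t *\<^sub>R e)" by (rule norm_triangle_ineq)
    also have "norm (t *\<^sub>R e) = \<bar>t\<bar>" unfolding e_def by simp
    finally show ?thesis using that unfolding U_def A_def by auto
  qed
  have eqF: "integral (cbox (-(A+B)) h) (\<lambda>r. \<phi> (x0 + t *\<^sub>R e + r *\<^sub>R v)) = Jf I v \<phi> (x0 + t *\<^sub>R e)" if "t \<in> U" for t
    using J_local(2)[OF v cs B h nU[OF that]] by (simp add: cbox_interval)
  have L: "((\<lambda>t. integral (cbox (-(A+B)) h) (\<lambda>r. \<phi> (x0 + t *\<^sub>R e + r *\<^sub>R v))) has_field_derivative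
       integral (cbox (-(A+B)) h) (\<lambda>r. pderivs [i] \<phi> (x0 + 0 *\<^sub>R e + r *\<^sub>R v))) (at 0 within U)"
  proof (rule leibniz_rule_field_derivative)
    fix t r assume "t \<in> U" "r \<in> cbox (-(A+B)) h"
    have "((\<lambda>t. \<phi> ((x0 + r *\<^sub>R v) + t *\<^sub>R axis i 1)) has_real_derivative pderivs [i] \<phi> ((x0 + r *\<^sub>R v) + t *\<^sub>R axis i 1)) (at t)"
      by (rule pdiff_D_at[OF smooth_pdiff[OF sm]])
    then have "((\<lambda>t. \<phi> (x0 + t *\<^sub>R e + r *\<^sub>R v)) has_real_derivative pderivs [i] \<phi> (x0 + t *\<^sub>R e + r *\<^sub>R v)) (at t)"
      unfolding e_def by (simp add: ac_simps)
    then show "((\<lambda>t. \<phi> (x0 + t *\<^sub>R e + r *\<^sub>R v)) has_field_derivative pderivs [i] \<phi> (x0 + t *\<^sub>R e + r *\<^sub>R v)) (at t within U)"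
      by (rule has_field_derivative_at_within)
  next
    fix t assume "t \<in> U"
    show "(\<lambda>r. \<phi> (x0 + t *\<^sub>R e + r *\<^sub>R v)) integrable_on cbox (-(A+B)) h"
      by (rule integrable_continuous) (rule cont_line[OF smooth_cont[OF sm]])
  next
    show "continuous_on (U \<times> cbox (-(A+B)) h) (\<lambda>(t, r). pderivs [i] \<phi> (x0 + t *\<^sub>R e + r *\<^sub>R v))"
      by (rule cont_prod_line2[OF smooth_cont[OF smooth_D[OF sm]]])
  next
    show "0 \<in> U" by (rule U0)
    show "convex U" unfolding U_def by simp
  qed
  have "at (0::real) within U = at 0" by (rule at_within_open[OF U0 oU])
  with L have L': "((\<lambda>t. integral (cbox (-(A+B)) h) (\<lambda>r. \<phi> (x0 + t *\<^sub>R e + r *\<^sub>R v))) has_field_derivative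
       integral (cbox (-(A+B)) h) (\<lambda>r. pderivs [i] \<phi> (x0 + 0 *\<^sub>R e + r *\<^sub>R v))) (at 0)" by simp
  have val: "integral (cbox (-(A+B)) h) (\<lambda>r. pderivs [i] \<phi> (x0 + 0 *\<^sub>R e + r *\<^sub>R v)) = Jf I v (pderivs [i] \<phi>) x0"
  proof -
    have "norm x0 \<le> A" unfolding A_def by simp
    from J_local(2)[OF v csD BD h this] show ?thesis by (simp add: cbox_interval)
  qed
  have "((\<lambda>t. Jf I v \<phi> (x0 + t *\<^sub>R e)) has_field_derivative Jf I v (pderivs [i] \<phi>) x0) (at 0)"
    using has_field_derivative_transform_within_open[OF L' oU U0 eqF] val by simp
  then show ?thesis unfolding e_def .
qed

lemma J_smooth:
  fixes v :: "real^'n::finite"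
  assumes v: "norm v = 1" and HI: "\<And>R. \<exists>h. \<forall>r. \<bar>r\<bar> \<le> R \<longrightarrow> (r \<in> I \<longleftrightarrow> r \<le> h)"
  shows "csmooth \<phi> \<Longrightarrow> smooth (Jf I v \<phi>)"
proof -
  have "\<forall>\<phi>. csmooth \<phi> \<longrightarrow> Pn n (Jf I v \<phi>)" for n
  proof (induction n)
    case 0 then show ?case by simp
  next
    case (Suc n)
    show ?case
    proof (intro allI impI)
      fix \<phi> :: "real^'n \<Rightarrow> real" assume cs: "csmooth \<phi>"
      have c: "continuous_on UNIV (Jf I v \<phi>)" by (rule J_cont[OF v cs HI])
      have d: "\<And>j y. ((\<lambda>t. Jf I v \<phi> (y + t *\<^sub>R axis j 1)) has_real_derivative (\<lambda>j. Jf I v (pderivs [j] \<phi>)) j y) (at 0)"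
        using J_deriv[OF v cs HI] by simp
      have "Pn n (Jf I v (pderivs [j] \<phi>))" for j using Suc.IH csmooth_D[OF cs] by blast
      then show "Pn (Suc n) (Jf I v \<phi>)" using pdiffI[OF c d] by simp
    qed
  qed
  then show "csmooth \<phi> \<Longrightarrow> smooth (Jf I v \<phi>)" unfolding smooth_Pn by blast
qed

lemma HI_half: "\<exists>h. \<forall>r. \<bar>r\<bar> \<le> R \<longrightarrow> (r \<in> {..c} \<longleftrightarrow> r \<le> h)"
  by (rule exI[of _ c]) simp

lemma HI_univ: "\<exists>h::real. \<forall>r. \<bar>r\<bar> \<le> (R::real) \<longrightarrow> (r \<in> UNIV \<longleftrightarrow> r \<le> h)"
  by (rule exI[of _ R]) (auto simp: abs_le_iff)


lemma antideriv_formula: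
  fixes v x :: "real^'n::finite"
  assumes v: "norm v = 1" and cs: "csmooth \<phi>" and \<psi>c: "continuous_on UNIV \<psi>"
    and \<psi>s: "\<And>s. s \<notin> {a..b} \<Longrightarrow> \<psi> s = 0"
  shows "fun_antideriv v \<psi> \<phi> x = Jf {..0} v \<phi> x - Jf UNIV v \<phi> x * integral {..x \<bullet> v} \<psi>"
proof -
  obtain B where B0: "B \<ge> 0" and B: "\<And>y. y \<in> closure {x. \<phi> x \<noteq> 0} \<Longrightarrow> norm y \<le> B"
    using csmooth_bound[OF cs] by metis
  define t where "t = x \<bullet> v"
  define u where "u = x - t *\<^sub>R v"
  define g where "g = (\<lambda>s. \<phi> (u + s *\<^sub>R v))"
  define A where "A = norm u + norm x + 2 * \<bar>t\<bar>"
  have gshift: "g \<circ> (+) t = (\<lambda>r. \<phi> (x + r *\<^sub>R v))"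
  proof
    fix r
    have "u + (t + r) *\<^sub>R v = x + r *\<^sub>R v" unfolding u_def by (simp add: algebra_simps)
    then show "(g \<circ> (+) t) r = \<phi> (x + r *\<^sub>R v)" by (simp add: g_def)
  qed
  have nu: "norm u \<le> A - t" unfolding A_def by (simp add: abs_if)
  have nx: "norm x \<le> A" unfolding A_def by simp
  have HIu: "\<And>r. \<bar>r\<bar> \<le> (A - t) + B \<Longrightarrow> (r \<in> {..t} \<longleftrightarrow> r \<le> t)" by simp
  have Iu: "integral {..t} g = integral {-((A-t)+B)..t} g"
    using J_local(2)[OF v cs B HIu nu] unfolding Jf_def g_def .
  have gint: "g integrable_on {..t}"
    using J_local(1)[OF v cs B HIu nu] unfolding g_def by blast
  have HIx: "\<And>r. \<bar>r\<bar> \<le> A + B \<Longrightarrow> (r \<in> {..0} \<longleftrightarrow> r \<le> 0)" by simp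
  have Ix: "Jf {..0} v \<phi> x = integral {-(A+B)..0} (\<lambda>r. \<phi> (x + r *\<^sub>R v))"
    by (rule J_local(2)[OF v cs B HIx nx])
  have "integral {-(A+B)..0} (\<lambda>r. \<phi> (x + r *\<^sub>R v)) = integral {-(A+B)+t..0+t} g"
    using integral_shift_Icc_real[of "-(A+B)" 0 g t] unfolding gshift .
  then have half: "integral {..t} g = Jf {..0} v \<phi> x"
    using Iu Ix by (simp add: algebra_simps)
  define H where "H = A + B + 2 * \<bar>t\<bar>"
  have HIu2: "(r \<in> UNIV \<longleftrightarrow> r \<le> H + t)" if "\<bar>r\<bar> \<le> (A - t) + B" for r
  proof -
    have "r \<le> H + t" using that abs_ge_self[of r] abs_ge_self[of t] abs_ge_minus_self[of t] unfolding H_def by linarith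
    then show ?thesis by simp
  qed
  have Xu: "Jf UNIV v \<phi> u = integral {-((A-t)+B)..H+t} g"
    using J_local(2)[OF v cs B HIu2 nu] unfolding g_def .
  have HIx2: "(r \<in> UNIV \<longleftrightarrow> r \<le> H)" if "\<bar>r\<bar> \<le> A + B" for r
  proof -
    have "r \<le> H" using that abs_ge_self[of r] abs_ge_self[of t] unfolding H_def by linarith
    then show ?thesis by simp
  qed
  have Xx: "Jf UNIV v \<phi> x = integral {-(A+B)..H} (\<lambda>r. \<phi> (x + r *\<^sub>R v))"
    by (rule J_local(2)[OF v cs B HIx2 nx])
  have "integral {-(A+B)..H} (\<lambda>r. \<phi> (x + r *\<^sub>R v)) = integral {-(A+B)+t..H+t} g"
    using integral_shift_Icc_real[of "-(A+B)" H g t] unfolding gshift .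
  then have full: "Jf UNIV v \<phi> u = Jf UNIV v \<phi> x"
    using Xu Xx by (simp add: algebra_simps)
  have \<psi>int: "\<psi> integrable_on {..t}" by (rule antideriv_int[OF \<psi>c \<psi>s])
  have "fun_antideriv v \<psi> \<phi> x = integral {..t} (\<lambda>s. g s - Jf UNIV v \<phi> u * \<psi> s)"
    unfolding fun_antideriv_def Let_def t_def[symmetric] u_def[symmetric] g_def xray_def Jf_def ..
  also have "\<dots> = integral {..t} g - Jf UNIV v \<phi> u * integral {..t} \<psi>"
  proof (rule integral_unique)
    have hg: "(g has_integral integral {..t} g) {..t}" using gint by (rule integrable_integral)
    have h\<psi>: "(\<psi> has_integral integral {..t} \<psi>) {..t}" using \<psi>int by (rule integrable_integral)
    show "((\<lambda>s. g s - Jf UNIV v \<phi> u * \<psi> s) has_integral (integral {..t} g - Jf UNIV v \<phi> u * integral {..t} \<psi>)) {..t}"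
      by (rule has_integral_diff[OF hg has_integral_mult_right[OF h\<psi>]])
  qed
  finally show ?thesis using half full t_def by simp
qed

lemma xray_Jf: "xray v \<phi> = Jf UNIV v \<phi>"
  by (rule ext) (simp add: xray_def Jf_def)

lemma antideriv_smooth:
  fixes v :: "real^'n::finite"
  assumes v: "norm v = 1" and cs: "csmooth \<phi>" and \<psi>1: "smooth1 \<psi>"
    and \<psi>s: "\<And>s. s \<notin> {a..b} \<Longrightarrow> \<psi> s = 0"
  shows "smooth (fun_antideriv v \<psi> \<phi>)"
proof -
  have "smooth (\<lambda>x. Jf {..0} v \<phi> x - Jf UNIV v \<phi> x * (\<lambda>s. integral {..s} \<psi>) (x \<bullet> v))"
  proof (rule smooth_diff)
    show "smooth (Jf {..0} v \<phi>)" by (rule J_smooth[OF v HI_half cs])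
    show "smooth (\<lambda>x. Jf UNIV v \<phi> x * (\<lambda>s. integral {..s} \<psi>) (x \<bullet> v))"
    proof (rule smooth_mult)
      show "smooth (Jf UNIV v \<phi>)" by (rule J_smooth[OF v HI_univ cs])
      show "smooth (\<lambda>x. (\<lambda>s. integral {..s} \<psi>) (x \<bullet> v))"
        by (rule smooth_comp1[OF smooth_inner smooth1_antideriv[OF \<psi>1 \<psi>s]])
    qed
  qed
  moreover have "fun_antideriv v \<psi> \<phi> = (\<lambda>x. Jf {..0} v \<phi> x - Jf UNIV v \<phi> x * (\<lambda>s. integral {..s} \<psi>) (x \<bullet> v))"
  proof
    fix x
    show "fun_antideriv v \<psi> \<phi> x = Jf {..0} v \<phi> x - Jf UNIV v \<phi> x * (\<lambda>s. integral {..s} \<psi>) (x \<bullet> v)"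
      using antideriv_formula[OF v cs smooth1_cont[OF \<psi>1] \<psi>s, where x=x] by simp
  qed
  ultimately show ?thesis by simp
qed


lemma dsupp_norm_bound:
  assumes "compact_distr w"
  obtains Bk where "Bk \<ge> 0" "\<And>y. y \<in> dsupp w \<Longrightarrow> norm y \<le> Bk"
proof -
  obtain K where K: "compact K" "dsupp w \<subseteq> K" by (rule dsupp_bounded[OF assms])
  then obtain a where a: "\<And>y. y \<in> K \<Longrightarrow> norm y \<le> a"
    using compact_imp_bounded bounded_iff by metis
  show ?thesis
  proof (rule that[of "max a 0"])
    fix y assume "y \<in> dsupp w"
    then have "norm y \<le> a" using K(2) a by (meson subsetD)
    then show "norm y \<le> max a 0" by simp
  qed simp
qed

lemma inner_lower:
  fixes y v :: "real^'n::finite"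
  assumes "norm v = 1" "norm y \<le> Bk" shows "- Bk \<le> y \<bullet> v"
proof -
  have "\<bar>y \<bullet> v\<bar> \<le> norm y * norm v" by (rule Cauchy_Schwarz_ineq2)
  then have "\<bar>y \<bullet> v\<bar> \<le> norm y" using assms(1) by simp
  then show ?thesis using assms(2) abs_ge_minus_self[of "y \<bullet> v"] by linarith
qed

lemma tmin_lower:
  assumes "\<And>y. y \<in> dsupp w \<Longrightarrow> c \<le> y \<bullet> v"
  shows "ereal c \<le> tmin v w"
  unfolding tmin_def
proof (rule Inf_greatest)
  fix z assume "z \<in> (\<lambda>x. ereal (x \<bullet> v)) ` dsupp w"
  then obtain y where "y \<in> dsupp w" "z = ereal (y \<bullet> v)" by blast
  then show "ereal c \<le> z" using assms by simp
qed

lemma tmin_le: "y \<in> dsupp w \<Longrightarrow> tmin v w \<le> ereal (y \<bullet> v)"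
  unfolding tmin_def by (rule Inf_lower) (rule imageI)

lemma adm_bounds:
  fixes v :: "real^'n::finite"
  assumes w: "compact_distr w" and v: "norm v = 1" and adm: "admissible_psi0 v w \<psi>"
  obtains a b where "\<And>s. s \<notin> {a..b} \<Longrightarrow> \<psi> s = 0" "\<And>y. y \<in> dsupp w \<Longrightarrow> b < y \<bullet> v"
proof -
  obtain Bk where Bk0: "Bk \<ge> 0" and Bk: "\<And>y. y \<in> dsupp w \<Longrightarrow> norm y \<le> Bk"
    using dsupp_norm_bound[OF w] by metis
  define S where "S = closure {s. \<psi> s \<noteq> 0}"
  have cS: "compact S" using adm unfolding admissible_psi0_def S_def by (elim conjE)
  have lt: "\<And>s. s \<in> S \<Longrightarrow> ereal s < tmin v w" using adm unfolding admissible_psi0_def S_def by (elim conjE) blast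
  define S' where "S' = insert (-Bk - 1) S"
  have cS': "compact S'" unfolding S'_def using cS by (rule compact_insert)
  have ne: "S' \<noteq> {}" unfolding S'_def by simp
  obtain b where b: "b \<in> S'" "\<And>s. s \<in> S' \<Longrightarrow> s \<le> b" using compact_attains_sup[OF cS' ne] by metis
  obtain a where a: "a \<in> S'" "\<And>s. s \<in> S' \<Longrightarrow> a \<le> s" using compact_attains_inf[OF cS' ne] by metis
  show ?thesis
  proof (rule that)
    fix s assume s: "s \<notin> {a..b}"
    have "s \<notin> S"
    proof
      assume "s \<in> S"
      then have "s \<in> S'" unfolding S'_def by simp
      then show False using a(2) b(2) s by force
    qed
    then have "s \<notin> {s. \<psi> s \<noteq> 0}" unfolding S_def using closure_subset by (metis subsetD)
    then show "\<psi> s = 0" by simp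
  next
    fix y assume y: "y \<in> dsupp w"
    show "b < y \<bullet> v"
    proof (cases "b = -Bk - 1")
      case True
      have "- Bk \<le> y \<bullet> v" by (rule inner_lower[OF v Bk[OF y]])
      then show ?thesis using True by simp
    next
      case False
      then have "b \<in> S" using b(1) unfolding S'_def by simp
      then have "ereal b < tmin v w" by (rule lt)
      also have "\<dots> \<le> ereal (y \<bullet> v)" by (rule tmin_le[OF y])
      finally show ?thesis by simp
    qed
  qed
qed

lemma adm_int1: "admissible_psi0 v w \<psi> \<Longrightarrow> integral UNIV \<psi> = 1"
  unfolding admissible_psi0_def by (elim conjE) (rule integral_unique)

lemma adm_smooth1: "admissible_psi0 v w \<psi> \<Longrightarrow> smooth1 \<psi>"
  unfolding admissible_psi0_def by (elim conjE)

lemma F_high: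
  fixes v :: "real^'n::finite"
  assumes v: "norm v = 1" and cs: "csmooth \<phi>" and \<psi>1: "smooth1 \<psi>"
    and \<psi>s: "\<And>s. s \<notin> {a..b} \<Longrightarrow> \<psi> s = 0" and i1: "integral UNIV \<psi> = 1" and x: "b \<le> x \<bullet> v"
  shows "fun_antideriv v \<psi> \<phi> x = Jf {..0} v \<phi> x - Jf UNIV v \<phi> x"
proof -
  have "integral {..x \<bullet> v} \<psi> = integral UNIV \<psi>"
    by (rule antideriv_high[OF smooth1_cont[OF \<psi>1] \<psi>s x])
  then show ?thesis using antideriv_formula[OF v cs smooth1_cont[OF \<psi>1] \<psi>s, where x=x] i1 by simp
qed

lemma indep:
  fixes v :: "real^'n::finite"
  assumes v: "norm v = 1" and w: "compact_distr w" and cs: "csmooth \<phi>"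
    and adm: "admissible_psi0 v w \<psi>" and adm': "admissible_psi0 v w \<psi>'"
  shows "w (fun_antideriv v \<psi> \<phi>) = w (fun_antideriv v \<psi>' \<phi>)"
proof -
  obtain a b where ab: "\<And>s. s \<notin> {a..b} \<Longrightarrow> \<psi> s = 0" "\<And>y. y \<in> dsupp w \<Longrightarrow> b < y \<bullet> v"
    using adm_bounds[OF w v adm] by metis
  obtain a' b' where ab': "\<And>s. s \<notin> {a'..b'} \<Longrightarrow> \<psi>' s = 0" "\<And>y. y \<in> dsupp w \<Longrightarrow> b' < y \<bullet> v"
    using adm_bounds[OF w v adm'] by metis
  have s1: "smooth (fun_antideriv v \<psi> \<phi>)" by (rule antideriv_smooth[OF v cs adm_smooth1[OF adm] ab(1)])
  have s2: "smooth (fun_antideriv v \<psi>' \<phi>)" by (rule antideriv_smooth[OF v cs adm_smooth1[OF adm'] ab'(1)])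
  define W where "W = {x. max b b' < x \<bullet> v}"
  have oW: "open W" unfolding W_def by (rule open_Collect_less) (intro continuous_intros)+
  have sW: "dsupp w \<subseteq> W" unfolding W_def using ab(2) ab'(2) by auto
  have zW: "fun_antideriv v \<psi> \<phi> x - fun_antideriv v \<psi>' \<phi> x = 0" if "x \<in> W" for x
  proof -
    have "b \<le> x \<bullet> v" "b' \<le> x \<bullet> v" using that unfolding W_def by auto
    then show ?thesis
      using F_high[OF v cs adm_smooth1[OF adm] ab(1) adm_int1[OF adm]]
        F_high[OF v cs adm_smooth1[OF adm'] ab'(1) adm_int1[OF adm']] by simp
  qed
  have "w (\<lambda>x. fun_antideriv v \<psi> \<phi> x - fun_antideriv v \<psi>' \<phi> x) = 0"
    by (rule localize[OF w smooth_diff[OF s1 s2] oW sW zW])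
  then show ?thesis using cd_diff[OF w s1 s2] by simp
qed


lemma claim2:
  fixes v :: "real^'n::finite"
  assumes v: "norm v = 1" and U: "open U" and bwd: "\<forall>t\<ge>0. \<forall>x\<in>U. x - t *\<^sub>R v \<in> U"
    and w1: "compact_distr w1" and w2: "compact_distr w2" and eq: "distr_eq_on U w1 w2"
    and tf: "test_fun_on U \<phi>" and \<psi>1: "smooth1 \<psi>" and \<psi>s: "\<And>s. s \<notin> {a..b} \<Longrightarrow> \<psi> s = 0"
    and i1: "integral UNIV \<psi> = 1"
    and bd: "\<And>y. y \<in> dsupp w1 \<union> dsupp w2 \<Longrightarrow> b < y \<bullet> v"
  shows "w1 (fun_antideriv v \<psi> \<phi>) = w2 (fun_antideriv v \<psi> \<phi>)"
proof -
  define d where "d = (\<lambda>\<phi>. w1 \<phi> - w2 \<phi>)"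
  have cd: "compact_distr d" unfolding d_def by (rule cd_minus[OF w1 w2])
  have cs: "csmooth \<phi>" using tf unfolding test_fun_on_def csmooth_def by (elim conjE) (intro conjI)
  define S\<phi> where "S\<phi> = closure {x. \<phi> x \<noteq> 0}"
  have cS: "compact S\<phi>" using tf unfolding test_fun_on_def S\<phi>_def by (elim conjE)
  have SU: "S\<phi> \<subseteq> U" using tf unfolding test_fun_on_def S\<phi>_def by (elim conjE)
  define Ray where "Ray = {y::real^'n. y = (y \<bullet> v) *\<^sub>R v} \<inter> {y. y \<bullet> v \<le> 0}"
  have cRay: "closed Ray" unfolding Ray_def
    by (intro closed_Int closed_Collect_eq closed_Collect_le continuous_intros)
  define C where "C = (\<Union>z\<in>S\<phi>. \<Union>y\<in>Ray. {z + y})"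
  have cC: "closed C" unfolding C_def by (rule compact_closed_sums[OF cS cRay])
  define W where "W = {x. b < x \<bullet> v} \<inter> - C"
  have oW: "open W" unfolding W_def
    by (intro open_Int open_Compl cC open_Collect_less continuous_intros)
  have notC: "y \<notin> C" if "y \<notin> U" for y
  proof
    assume "y \<in> C"
    then obtain z r where z: "z \<in> S\<phi>" and r: "r \<in> Ray" and y: "y = z + r" unfolding C_def by blast
    have r1: "r = (r \<bullet> v) *\<^sub>R v" and r2: "r \<bullet> v \<le> 0" using r unfolding Ray_def by auto
    have zU: "z \<in> U" using z SU by (meson subsetD)
    have "z - (- (r \<bullet> v)) *\<^sub>R v \<in> U" using bwd[rule_format, of "- (r \<bullet> v)" z] zU r2 by simp
    moreover have "z - (- (r \<bullet> v)) *\<^sub>R v = y" using y r1 by (metis diff_minus_eq_add scaleR_minus_left)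
    ultimately show False using that by simp
  qed
  have sW: "dsupp d \<subseteq> W"
  proof
    fix y assume "y \<in> dsupp d"
    then have "y \<in> (dsupp w1 \<union> dsupp w2) \<inter> - U" using dsupp_minus[OF U eq] unfolding d_def by (meson subsetD)
    then show "y \<in> W" unfolding W_def using bd notC by auto
  qed
  have F0: "fun_antideriv v \<psi> \<phi> x = 0" if xW: "x \<in> W" for x
  proof -
    have xb: "b \<le> x \<bullet> v" and xC: "x \<notin> C" using xW unfolding W_def by auto
    have Fx: "fun_antideriv v \<psi> \<phi> x = Jf {..0} v \<phi> x - Jf UNIV v \<phi> x"
      by (rule F_high[OF v cs \<psi>1 \<psi>s i1 xb])
    define g where "g = (\<lambda>r. \<phi> (x + r *\<^sub>R v))"
    have gz: "g r = 0" if "r > 0" for r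
    proof (rule ccontr)
      assume "g r \<noteq> 0"
      then have "x + r *\<^sub>R v \<in> S\<phi>" unfolding g_def S\<phi>_def using closure_subset by (metis (mono_tags, lifting) mem_Collect_eq subsetD)
      moreover have "(- r) *\<^sub>R v \<in> Ray" unfolding Ray_def using v that by (simp add: inner_commute power2_norm_eq_inner[symmetric])
      ultimately have "(x + r *\<^sub>R v) + (- r) *\<^sub>R v \<in> C" unfolding C_def by blast
      then show False using xC by simp
    qed
    obtain B where B: "\<And>y. y \<in> closure {x. \<phi> x \<noteq> 0} \<Longrightarrow> norm y \<le> B"
      using csmooth_bound[OF cs] by metis
    obtain h where h: "\<forall>r. \<bar>r\<bar> \<le> norm x + B \<longrightarrow> (r \<in> UNIV \<longleftrightarrow> r \<le> h)" using HI_univ by blast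
    have hU: "(g has_integral (integral {-(norm x + B)..h} g)) UNIV"
      using J_local(1)[OF v cs B, of "norm x" UNIV h x] h unfolding g_def by simp
    have e1: "{r \<in> UNIV - {..0}. g r \<noteq> 0} = {}" using gz by (auto simp: not_le)
    have e2: "{r \<in> {..0} - UNIV. g r \<noteq> 0} = {}" by auto
    have n1: "negligible {r \<in> UNIV - {..0}. g r \<noteq> 0}" by (simp only: e1 negligible_empty)
    have n2: "negligible {r \<in> {..0} - UNIV. g r \<noteq> 0}" by (simp only: e2 negligible_empty)
    have hH: "(g has_integral (integral {-(norm x + B)..h} g)) {..0}"
      using has_integral_spike_set_eq[OF n1 n2] hU by blast
    have "Jf {..0} v \<phi> x = Jf UNIV v \<phi> x"
      unfolding Jf_def g_def[symmetric] using integral_unique[OF hH] integral_unique[OF hU] by simp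
    then show ?thesis using Fx by simp
  qed
  have sF: "smooth (fun_antideriv v \<psi> \<phi>)" by (rule antideriv_smooth[OF v cs \<psi>1 \<psi>s])
  have "d (fun_antideriv v \<psi> \<phi>) = 0" by (rule localize[OF cd sF oW sW F0])
  then show ?thesis unfolding d_def by simp
qed

theorem proposition1p5:
  fixes v :: "real^'n" and U :: "(real^'n) set"
    and w1 w2 :: "(real^'n \<Rightarrow> real) \<Rightarrow> complex"
  assumes "norm v = 1"
    and "open U"
    and "\<forall>t\<ge>0. \<forall>x\<in>U. x - t *\<^sub>R v \<in> U"
    and "compact_distr w1" and "compact_distr w2"
    and "distr_eq_on U w1 w2"
  shows "distr_eq_on U (distr_antideriv v w1) (distr_antideriv v w2)"
  unfolding distr_eq_on_def
proof (intro allI impI)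
  note v = assms(1) and U = assms(2) and bwd = assms(3) and w1 = assms(4) and w2 = assms(5) and eq = assms(6)
  fix \<phi> assume tf: "test_fun_on U \<phi>"
  have cs: "csmooth \<phi>" using tf unfolding test_fun_on_def csmooth_def by (elim conjE) (intro conjI)
  obtain B1 where B10: "B1 \<ge> 0" and B1: "\<And>y. y \<in> dsupp w1 \<Longrightarrow> norm y \<le> B1"
    using dsupp_norm_bound[OF w1] by metis
  obtain B2 where B20: "B2 \<ge> 0" and B2: "\<And>y. y \<in> dsupp w2 \<Longrightarrow> norm y \<le> B2"
    using dsupp_norm_bound[OF w2] by metis
  define T where "T = - (B1 + B2)"
  have lowT: "T \<le> y \<bullet> v" if "y \<in> dsupp w1 \<union> dsupp w2" for y
  proof (cases "y \<in> dsupp w1")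
    case True then show ?thesis using inner_lower[OF v B1[OF True]] B20 unfolding T_def by linarith
  next
    case False then have "y \<in> dsupp w2" using that by blast
    then show ?thesis using inner_lower[OF v B2[OF \<open>y \<in> dsupp w2\<close>]] B10 unfolding T_def by linarith
  qed
  obtain \<psi> where \<psi>1: "smooth1 \<psi>" and \<psi>c: "compact (closure {s. \<psi> s \<noteq> 0})" and \<psi>i: "(\<psi> has_integral 1) UNIV"
    and \<psi>sub: "closure {s. \<psi> s \<noteq> 0} \<subseteq> {T-2..T-1}"
    using psi_exists[of T] by metis
  have \<psi>s: "\<psi> s = 0" if "s \<notin> {T-2..T-1}" for s
  proof (rule ccontr)
    assume "\<psi> s \<noteq> 0"
    then have "s \<in> closure {s. \<psi> s \<noteq> 0}" using closure_subset by (metis (mono_tags, lifting) mem_Collect_eq subsetD)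
    then show False using \<psi>sub that by blast
  qed
  have adm: "admissible_psi0 v w \<psi>" if "w = w1 \<or> w = w2" for w
    unfolding admissible_psi0_def
  proof (intro conjI ballI)
    show "smooth1 \<psi>" "compact (closure {s. \<psi> s \<noteq> 0})" "(\<psi> has_integral 1) UNIV" by fact+
    fix s assume s: "s \<in> closure {s. \<psi> s \<noteq> 0}"
    have "s \<le> T - 1" using \<psi>sub s by auto
    then have "ereal s < ereal T" by simp
    also have "ereal T \<le> tmin v w" by (rule tmin_lower) (use lowT that in auto)
    finally show "ereal s < tmin v w" .
  qed
  have i1: "integral UNIV \<psi> = 1" using \<psi>i by (rule integral_unique)
  define \<psi>a where "\<psi>a = (SOME \<psi>0. admissible_psi0 v w1 \<psi>0)"
  define \<psi>b where "\<psi>b = (SOME \<psi>0. admissible_psi0 v w2 \<psi>0)"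
  have adma: "admissible_psi0 v w1 \<psi>a" unfolding \<psi>a_def by (rule someI[of _ \<psi>]) (rule adm, simp)
  have admb: "admissible_psi0 v w2 \<psi>b" unfolding \<psi>b_def by (rule someI[of _ \<psi>]) (rule adm, simp)
  have "w1 (fun_antideriv v \<psi>a \<phi>) = w1 (fun_antideriv v \<psi> \<phi>)"
    by (rule indep[OF v w1 cs adma adm]) simp
  also have "\<dots> = w2 (fun_antideriv v \<psi> \<phi>)"
  proof (rule claim2[OF v U bwd w1 w2 eq tf \<psi>1 \<psi>s i1])
    fix y assume "y \<in> dsupp w1 \<union> dsupp w2"
    from lowT[OF this] show "T - 1 < y \<bullet> v" by simp
  qed
  also have "\<dots> = w2 (fun_antideriv v \<psi>b \<phi>)"
    by (rule indep[OF v w2 cs adm admb]) simp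
  finally show "distr_antideriv v w1 \<phi> = distr_antideriv v w2 \<phi>"
    unfolding distr_antideriv_def \<psi>a_def[symmetric] \<psi>b_def[symmetric] by simp
qed


end
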